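(* Let $n$ be a positive integer and $k$ an even integer with $n/2+1\le k\le n-1$, and let $x\mapsto p_x\in\mathbb{R}^n$ be given by $p_x(i)=(-1)^{x_i}/\sqrt{n}$ for $i\in[n]$. Then for any graph $G$ with $H_{n,k}\subsetneq G\subseteq H'_{n,k}$ we have $\chi_v(G)=\chi_v(H_{n,k})$, $G$ is uniquely vector colorable, its unique optimal vector coloring is $x\mapsto p_x$, and this vector coloring is not strict for $G$. In particular $\chi_v(G)<\chi_{sv}(G)$.
   Context: $H_{n,k}$ is the graph on the even-weight elements of $\mathbb{Z}_2^n$ with $x\sim y$ iff the Hamming distance $d(x,y)=k$; $H'_{n,k}$ is the graph on the same vertices with $x\sim y$ iff $d(x,y)\ge k$; $G$ has this same vertex set and its edge set strictly contains that of $H_{n,k}$ and is contained in that of $H'_{n,k}$. A vector $t$-coloring ($t\ge2$) assigns unit vectors $p_i$ to vertices with $\langle p_i,p_j\rangle\le -1/(t-1)$ on edges; it is strict if equality holds on every edge. $\chi_v$ (resp. $\chi_{sv}$) is the least $t\ge2$ admitting a (resp. strict) vector $t$-coloring; optimal means $t=\chi_v$. A graph is uniquely vector colorable if any two optimal vector colorings have equal Gram matrices; "unique optimal vector coloring is $x\mapsto p_x$" means every optimal vector coloring has the same Gram matrix as $x\mapsto p_x$. *)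

theory Defs
  imports Complex_Main
begin

text \<open>Vectors of a vector coloring live in R^d for some finite d, represented as functions
  nat => real vanishing outside {..<d}.\<close>

definition ip :: "nat \<Rightarrow> (nat \<Rightarrow> real) \<Rightarrow> (nat \<Rightarrow> real) \<Rightarrow> real" where
  "ip d u v = (\<Sum>i<d. u i * v i)"

definition unit_vec_on :: "nat \<Rightarrow> (nat \<Rightarrow> real) \<Rightarrow> bool" where
  "unit_vec_on d u \<longleftrightarrow> (\<forall>i\<ge>d. u i = 0) \<and> ip d u u = 1"

definition vector_coloring ::
  "'v set \<Rightarrow> ('v \<times> 'v) set \<Rightarrow> real \<Rightarrow> nat \<Rightarrow> ('v \<Rightarrow> nat \<Rightarrow> real) \<Rightarrow> bool" where
  "vector_coloring V E t d p \<longleftrightarrow> t \<ge> 2 \<and> (\<forall>x\<in>V. unit_vec_on d (p x)) \<and>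
     (\<forall>(x,y)\<in>E. ip d (p x) (p y) \<le> - 1 / (t - 1))"

definition strict_vector_coloring ::
  "'v set \<Rightarrow> ('v \<times> 'v) set \<Rightarrow> real \<Rightarrow> nat \<Rightarrow> ('v \<Rightarrow> nat \<Rightarrow> real) \<Rightarrow> bool" where
  "strict_vector_coloring V E t d p \<longleftrightarrow> t \<ge> 2 \<and> (\<forall>x\<in>V. unit_vec_on d (p x)) \<and>
     (\<forall>(x,y)\<in>E. ip d (p x) (p y) = - 1 / (t - 1))"

definition chi_v :: "'v set \<Rightarrow> ('v \<times> 'v) set \<Rightarrow> real" where
  "chi_v V E = Inf {t. \<exists>d p. vector_coloring V E t d p}"

definition chi_sv :: "'v set \<Rightarrow> ('v \<times> 'v) set \<Rightarrow> real" where
  "chi_sv V E = Inf {t. \<exists>d p. strict_vector_coloring V E t d p}"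

definition optimal_vector_coloring ::
  "'v set \<Rightarrow> ('v \<times> 'v) set \<Rightarrow> nat \<Rightarrow> ('v \<Rightarrow> nat \<Rightarrow> real) \<Rightarrow> bool" where
  "optimal_vector_coloring V E d p \<longleftrightarrow> vector_coloring V E (chi_v V E) d p"

definition same_gram ::
  "'v set \<Rightarrow> nat \<Rightarrow> ('v \<Rightarrow> nat \<Rightarrow> real) \<Rightarrow> nat \<Rightarrow> ('v \<Rightarrow> nat \<Rightarrow> real) \<Rightarrow> bool" where
  "same_gram V d p d' q \<longleftrightarrow> (\<forall>x\<in>V. \<forall>y\<in>V. ip d (p x) (p y) = ip d' (q x) (q y))"

definition uniquely_vector_colorable :: "'v set \<Rightarrow> ('v \<times> 'v) set \<Rightarrow> bool" where
  "uniquely_vector_colorable V E \<longleftrightarrow>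
     (\<forall>d p d' q. optimal_vector_coloring V E d p \<and> optimal_vector_coloring V E d' q
        \<longrightarrow> same_gram V d p d' q)"

text \<open>Elements of Z_2^n are represented by their supports, subsets of {..<n}.\<close>

definition even_cube :: "nat \<Rightarrow> nat set set" where
  "even_cube n = {x. x \<subseteq> {..<n} \<and> even (card x)}"

definition hamming :: "nat set \<Rightarrow> nat set \<Rightarrow> nat" where
  "hamming x y = card ((x - y) \<union> (y - x))"

definition H_edges :: "nat \<Rightarrow> nat \<Rightarrow> (nat set \<times> nat set) set" where
  "H_edges n k = {(x,y). x \<in> even_cube n \<and> y \<in> even_cube n \<and> hamming x y = k}"

definition H'_edges :: "nat \<Rightarrow> nat \<Rightarrow> (nat set \<times> nat set) set" where
  "H'_edges n k = {(x,y). x \<in> even_cube n \<and> y \<in> even_cube n \<and> hamming x y \<ge> k}"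

definition cube_vec :: "nat \<Rightarrow> nat set \<Rightarrow> nat \<Rightarrow> real" where
  "cube_vec n x i = (if i < n then (if i \<in> x then -1 else 1) / sqrt (real n) else 0)"

end

theory Submission
  imports Defs
begin

definition KW :: "nat set \<Rightarrow> nat set \<Rightarrow> nat \<Rightarrow> real" where
  "KW U S k = (\<Sum>T \<in> {T. T \<subseteq> U \<and> card T = k}. (-1) ^ card (S \<inter> T))"

lemma subsets_insert_Suc:
  assumes "finite U" "a \<notin> U"
  shows "{T. T \<subseteq> insert a U \<and> card T = Suc k} =
     {T. T \<subseteq> U \<and> card T = Suc k} \<union> insert a ` {T. T \<subseteq> U \<and> card T = k}"
proof (intro equalityI subsetI)
  fix T assume T: "T \<in> {T. T \<subseteq> insert a U \<and> card T = Suc k}"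
  show "T \<in> {T. T \<subseteq> U \<and> card T = Suc k} \<union> insert a ` {T. T \<subseteq> U \<and> card T = k}"
  proof (cases "a \<in> T")
    case True
    have "T = insert a (T - {a})" using True by auto
    moreover have "card (T - {a}) = k" using T True
      by (simp add: card_Diff_singleton)
    moreover have "T - {a} \<subseteq> U" using T by auto
    ultimately show ?thesis by blast
  next
    case False
    then show ?thesis using T by auto
  qed
next
  fix T assume T: "T \<in> {T. T \<subseteq> U \<and> card T = Suc k} \<union> insert a ` {T. T \<subseteq> U \<and> card T = k}"
  then show "T \<in> {T. T \<subseteq> insert a U \<and> card T = Suc k}"
  proof
    assume "T \<in> insert a ` {T. T \<subseteq> U \<and> card T = k}"
    then obtain T' where "T = insert a T'" "T' \<subseteq> U" "card T' = k" by auto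
    moreover have "finite T'" using calculation assms(1) finite_subset by blast
    moreover have "a \<notin> T'" using calculation assms(2) by auto
    ultimately show ?thesis by auto
  qed auto
qed

lemma KW_insert:
  assumes "finite U" "a \<notin> U"
  shows "KW (insert a U) S (Suc k) = KW U S (Suc k) + (if a \<in> S then -1 else 1) * KW U S k"
proof -
  have fin: "finite {T. T \<subseteq> U \<and> card T = j}" for j using assms(1) by auto
  have disj: "{T. T \<subseteq> U \<and> card T = Suc k} \<inter> insert a ` {T. T \<subseteq> U \<and> card T = k} = {}"
    using assms(2) by auto
  have inj: "inj_on (insert a) {T. T \<subseteq> U \<and> card T = k}"
    using assms(2) unfolding inj_on_def by (metis insert_ident subset_iff mem_Collect_eq)
  have "KW (insert a U) S (Suc k) = KW U S (Suc k) +
      (\<Sum>T\<in>insert a ` {T. T \<subseteq> U \<and> card T = k}. (-1) ^ card (S \<inter> T))"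
    unfolding KW_def subsets_insert_Suc[OF assms]
    by (rule sum.union_disjoint) (use fin disj assms(1) in auto)
  also have "(\<Sum>T\<in>insert a ` {T. T \<subseteq> U \<and> card T = k}. (-1) ^ card (S \<inter> T)) =
      (\<Sum>T\<in>{T. T \<subseteq> U \<and> card T = k}. (-1) ^ card (S \<inter> insert a T) :: real)"
    by (subst sum.reindex[OF inj]) simp
  also have "\<dots> = (\<Sum>T\<in>{T. T \<subseteq> U \<and> card T = k}. (if a \<in> S then -1 else 1) * (-1) ^ card (S \<inter> T))"
  proof (rule sum.cong[OF refl])
    fix T assume T: "T \<in> {T. T \<subseteq> U \<and> card T = k}"
    then have fT: "finite T" using assms(1) finite_subset by auto
    have "a \<notin> T" using T assms(2) by auto
    show "(-1) ^ card (S \<inter> insert a T) = (if a \<in> S then -1 else 1) * ((-1::real) ^ card (S \<inter> T))"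
    proof (cases "a \<in> S")
      case True
      then have "S \<inter> insert a T = insert a (S \<inter> T)" by auto
      then show ?thesis using True \<open>a \<notin> T\<close> fT by simp
    next
      case False
      then have "S \<inter> insert a T = S \<inter> T" by auto
      then show ?thesis using False by simp
    qed
  qed
  also have "\<dots> = (if a \<in> S then -1 else 1) * KW U S k"
    unfolding KW_def by (simp add: sum_distrib_left)
  finally show ?thesis .
qed


lemma subsets_card0: "finite U \<Longrightarrow> {T. T \<subseteq> U \<and> card T = 0} = {{}}"
  by (auto simp: finite_subset)

lemma KW_0: "finite U \<Longrightarrow> KW U S 0 = 1"
  unfolding KW_def by (simp add: subsets_card0)

lemma KW_big: assumes "finite U" "card U < k" shows "KW U S k = 0"
proof -
  have e: "{T. T \<subseteq> U \<and> card T = k} = {}"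
    using assms by (auto dest: card_mono)
  show ?thesis unfolding KW_def e by simp
qed

lemma KW_disj: assumes "finite U" "S \<inter> U = {}" shows "KW U S k = real (card U choose k)"
proof -
  have "KW U S k = (\<Sum>T \<in> {T. T \<subseteq> U \<and> card T = k}. 1)"
    unfolding KW_def
  proof (rule sum.cong[OF refl])
    fix T assume "T \<in> {T. T \<subseteq> U \<and> card T = k}"
    then have "S \<inter> T = {}" using assms by auto
    then show "(-1::real) ^ card (S \<inter> T) = 1" by simp
  qed
  also have "\<dots> = real (card U choose k)" using n_subsets[OF assms(1)] by simp
  finally show ?thesis .
qed

lemma KW_compl_S:
  assumes "finite U"
  shows "KW U S k = (-1) ^ k * KW U (U - S) k"
  unfolding KW_def sum_distrib_left
proof (rule sum.cong[OF refl])
  fix T assume T: "T \<in> {T. T \<subseteq> U \<and> card T = k}"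
  then have fT: "finite T" using assms finite_subset by auto
  have "card (S \<inter> T) + card ((U - S) \<inter> T) = card T"
  proof -
    have "T = (S \<inter> T) \<union> ((U - S) \<inter> T)" using T by auto
    moreover have "(S \<inter> T) \<inter> ((U - S) \<inter> T) = {}" by auto
    ultimately show ?thesis using fT
      by (metis card_Un_disjoint finite_Int inf_commute)
  qed
  then have "card (S \<inter> T) + card ((U - S) \<inter> T) = k" using T by simp
  then have "(-1::real) ^ k * (-1) ^ card ((U - S) \<inter> T) = (-1) ^ card (S \<inter> T) *
      ((-1) ^ card ((U - S) \<inter> T) * (-1) ^ card ((U - S) \<inter> T))"
    by (metis power_add mult.assoc)
  also have "((-1::real) ^ card ((U - S) \<inter> T) * (-1) ^ card ((U - S) \<inter> T)) = 1"
    by (simp flip: power_mult_distrib)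
  finally show "(-1::real) ^ card (S \<inter> T) = (-1) ^ k * (-1) ^ card ((U - S) \<inter> T)"
    by simp
qed

lemma KW_compl_k:
  assumes "finite U" "k \<le> card U"
  shows "KW U S (card U - k) = (-1) ^ card (S \<inter> U) * KW U S k"
proof -
  have bij: "bij_betw (\<lambda>T. U - T) {T. T \<subseteq> U \<and> card T = k} {T. T \<subseteq> U \<and> card T = card U - k}"
  proof (rule bij_betw_byWitness[where f' = "\<lambda>T. U - T"])
    show "\<forall>a\<in>{T. T \<subseteq> U \<and> card T = k}. U - (U - a) = a" by auto
    show "\<forall>a\<in>{T. T \<subseteq> U \<and> card T = card U - k}. U - (U - a) = a" by auto
    show "(-) U ` {T. T \<subseteq> U \<and> card T = k} \<subseteq> {T. T \<subseteq> U \<and> card T = card U - k}"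
      using assms(1) by (auto simp: card_Diff_subset finite_subset)
    show "(-) U ` {T. T \<subseteq> U \<and> card T = card U - k} \<subseteq> {T. T \<subseteq> U \<and> card T = k}"
      using assms by (auto simp: card_Diff_subset finite_subset)
  qed
  have "KW U S (card U - k) = (\<Sum>T \<in> {T. T \<subseteq> U \<and> card T = k}. (-1) ^ card (S \<inter> (U - T)))"
    unfolding KW_def by (rule sum.reindex_bij_betw[OF bij, symmetric])
  also have "\<dots> = (\<Sum>T \<in> {T. T \<subseteq> U \<and> card T = k}. (-1) ^ card (S \<inter> U) * (-1) ^ card (S \<inter> T))"
  proof (rule sum.cong[OF refl])
    fix T assume T: "T \<in> {T. T \<subseteq> U \<and> card T = k}"
    have fin: "finite (S \<inter> U)" using assms by auto
    have "S \<inter> (U - T) = (S \<inter> U) - (S \<inter> T)" by auto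
    moreover have "S \<inter> T \<subseteq> S \<inter> U" using T by auto
    moreover have "card (S \<inter> U - S \<inter> T) = card (S \<inter> U) - card (S \<inter> T)"
      using fin \<open>S \<inter> T \<subseteq> S \<inter> U\<close> by (meson card_Diff_subset finite_subset)
    moreover have "card (S \<inter> T) \<le> card (S \<inter> U)"
      using fin \<open>S \<inter> T \<subseteq> S \<inter> U\<close> card_mono by blast
    ultimately have c: "card (S \<inter> (U - T)) + card (S \<inter> T) = card (S \<inter> U)"
      by simp
    have "(-1::real) ^ card (S \<inter> U) * (-1) ^ card (S \<inter> T) = (-1) ^ card (S \<inter> (U - T)) *
      ((-1) ^ card (S \<inter> T) * (-1) ^ card (S \<inter> T))"
      by (metis c power_add mult.assoc)
    also have "((-1::real) ^ card (S \<inter> T) * (-1) ^ card (S \<inter> T)) = 1"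
      by (simp flip: power_mult_distrib)
    finally show "(-1::real) ^ card (S \<inter> (U - T)) = (-1) ^ card (S \<inter> U) * (-1) ^ card (S \<inter> T)"
      by simp
  qed
  also have "\<dots> = (-1) ^ card (S \<inter> U) * KW U S k"
    unfolding KW_def by (simp add: sum_distrib_left)
  finally show ?thesis .
qed

lemma KW_two:
  assumes "finite U" "a \<in> S" "b \<notin> S" "a \<notin> U" "b \<notin> U" "2 \<le> k"
  shows "KW (insert a (insert b U)) S k = KW U S k - KW U S (k - 2)"
proof -
  obtain j where k: "k = Suc (Suc j)" using assms(6) by (metis add_2_eq_Suc le_Suc_ex)
  have ab: "a \<noteq> b" using assms by auto
  have b: "KW (insert b U) S (Suc i) = KW U S (Suc i) + KW U S i" for i
    using KW_insert[OF assms(1) assms(5)] assms(3) by simp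
  have a: "KW (insert a (insert b U)) S (Suc i) = KW (insert b U) S (Suc i) - KW (insert b U) S i" for i
    using KW_insert[of "insert b U" a S i] assms ab by simp
  show ?thesis unfolding k using a[of "Suc j"] b[of "Suc j"] b[of j] by simp
qed

lemma KW_single:
  assumes "finite U" "S \<inter> U = {a}"
  shows "KW U S k = real (card U choose k) * (real (card U) - 2 * real k) / real (card U)"
proof -
  have aU: "a \<in> U" and aS: "a \<in> S" using assms(2) by auto
  define U0 where "U0 = U - {a}"
  have U: "U = insert a U0" "a \<notin> U0" "finite U0" using aU assms(1) unfolding U0_def by auto
  have dis: "S \<inter> U0 = {}" using assms(2) unfolding U0_def by auto
  have cU: "card U = Suc (card U0)" using U by simp
  show ?thesis
  proof (cases k)
    case 0
    then show ?thesis using KW_0[OF assms(1)] cU by simp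
  next
    case (Suc j)
    have kw: "KW U S k = real (card U0 choose Suc j) - real (card U0 choose j)"
      unfolding Suc U(1) using KW_insert[OF U(3) U(2)] aS KW_disj[OF U(3) dis] by simp
    have f1: "real (card U choose k) * (real (card U) - real k) = real (card U) * real (card U0 choose k)"
    proof -
      have "(card U - k) * (card U choose k) = card U * ((card U - 1) choose k)"
        by (rule binomial_absorb_comp)
      then have "real (card U - k) * real (card U choose k) = real (card U) * real (card U0 choose k)"
        using cU by (metis diff_Suc_1 of_nat_mult)
      moreover have "k \<le> card U \<or> card U choose k = 0" by auto
      ultimately show ?thesis using cU by (cases "k \<le> card U") (auto simp: of_nat_diff mult.commute binomial_eq_0)
    qed
    have f2: "real (card U choose k) * real k = real (card U) * real (card U0 choose j)"
    proof -
      have "k * (card U choose k) = card U * ((card U - 1) choose (k - 1))"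
        using Suc by (intro times_binomial_minus1_eq) simp
      then show ?thesis using cU Suc by (metis diff_Suc_1 mult.commute of_nat_mult)
    qed
    have "real (card U choose k) * (real (card U) - 2 * real k) =
        real (card U choose k) * (real (card U) - real k) - real (card U choose k) * real k"
      by (simp add: algebra_simps)
    also have "\<dots> = real (card U) * KW U S k" by (simp only: f1 f2 kw) (simp add: Suc algebra_simps)
    finally have e: "real (card U choose k) * (real (card U) - 2 * real k) = real (card U) * KW U S k" .
    have "real (card U) > 0" using cU by simp
    then show ?thesis using e by (simp add: field_simps)
  qed
qed

definition Bd :: "nat \<Rightarrow> nat \<Rightarrow> real" where
  "Bd n k = (if 2 * k = n then real (n choose k) / (real n - 1)
             else real (n choose k) * \<bar>2 * real k - real n\<bar> / real n)"

lemma bin1: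
  assumes "2 \<le> n" "k \<le> n"
  shows "real ((n - 2) choose k) * (real n * (real n - 1)) =
         real (n choose k) * (real n - real k) * (real n - real k - 1)"
proof (cases "k = n")
  case True
  then show ?thesis using assms by (simp add: binomial_eq_0)
next
  case False
  then have kn: "k \<le> n - 1" using assms by auto
  have e1: "(n - k) * (n choose k) = n * ((n - 1) choose k)" by (rule binomial_absorb_comp)
  have e2: "((n - 1) - k) * ((n - 1) choose k) = (n - 1) * ((n - 1 - 1) choose k)"
    by (rule binomial_absorb_comp)
  have "(n - k) * ((n - 1) - k) * (n choose k) = n * (n - 1) * ((n - 2) choose k)"
    using e1 e2 by (metis diff_diff_left mult.assoc mult.left_commute one_add_one)
  then have "real ((n - k) * ((n - 1) - k) * (n choose k)) = real (n * (n - 1) * ((n - 2) choose k))"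
    by simp
  moreover have "real (n - k) = real n - real k" "real (n - 1 - k) = real n - real k - 1"
    "real (n - 1) = real n - 1" using kn assms by (auto simp: of_nat_diff)
  ultimately show ?thesis by (simp only: of_nat_mult) (simp add: algebra_simps)
qed

lemma bin2:
  assumes "2 \<le> n" "2 \<le> k"
  shows "real ((n - 2) choose (k - 2)) * (real n * (real n - 1)) =
         real (n choose k) * real k * (real k - 1)"
proof -
  have e1: "k * (n choose k) = n * ((n - 1) choose (k - 1))"
    using assms by (intro times_binomial_minus1_eq) simp
  have e2: "(k - 1) * ((n - 1) choose (k - 1)) = (n - 1) * ((n - 1 - 1) choose (k - 1 - 1))"
    using assms by (intro times_binomial_minus1_eq) simp
  have "k * (k - 1) * (n choose k) = n * (n - 1) * ((n - 2) choose (k - 2))"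
    using e1 e2 by (metis diff_diff_left mult.assoc mult.left_commute one_add_one)
  then have "real (k * (k - 1) * (n choose k)) = real (n * (n - 1) * ((n - 2) choose (k - 2)))"
    by simp
  moreover have "real (k - 1) = real k - 1" "real (n - 1) = real n - 1"
    using assms by (auto simp: of_nat_diff)
  ultimately show ?thesis by (simp only: of_nat_mult) (simp add: algebra_simps)
qed

lemma div_sum_cancel:
  fixes p q M D :: real
  assumes "D \<noteq> 0" shows "(p / D + q / D) * (M * D) = (p + q) * M"
  using assms by (simp add: field_simps)

lemma div_cancel2:
  fixes p M D :: real
  assumes "D \<noteq> 0" shows "p / D * (D * M) = p * M"
  using assms by simp

lemma le_by_mult:
  fixes x y D :: real
  assumes "D > 0" "x * D \<le> y * D" shows "x \<le> y"
  using assms by simp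

lemma lt_by_mult:
  fixes x y D :: real
  assumes "D > 0" "x * D < y * D" shows "x < y"
  using assms by simp

lemma Bd_ineq_gen:
  fixes A B c N K :: real
  assumes N: "N > 2" and hA: "A * (N * (N - 1)) = c * (N - K) * (N - K - 1)"
    and hB: "B * (N * (N - 1)) = c * K * (K - 1)"
  shows "(A * (2*K - N + 2) / (N - 2) + B * (2*K - N - 2) / (N - 2)) * (N * (N - 1) * (N - 2))
       = c * (2*K - N) / N * (N * ((N - 1) * (N - 2))) - 2 * c * (2*K - N) * K * (N - K)"
proof -
  have n0: "N - 2 \<noteq> 0" "N \<noteq> 0" using N by auto
  have "(A * (2*K - N + 2) / (N - 2) + B * (2*K - N - 2) / (N - 2)) * (N * (N - 1) * (N - 2))
      = (A * (N * (N - 1))) * (2*K - N + 2) + (B * (N * (N - 1))) * (2*K - N - 2)"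
    using div_sum_cancel[OF n0(1), of "A * (2*K - N + 2)" "B * (2*K - N - 2)" "N * (N - 1)"]
    by (simp add: algebra_simps)
  also have "\<dots> = c * (N - K) * (N - K - 1) * (2*K - N + 2) + c * K * (K - 1) * (2*K - N - 2)"
    unfolding hA hB ..
  also have "\<dots> = c * (2*K - N) * ((N - 1) * (N - 2)) - 2 * c * (2*K - N) * K * (N - K)"
    by algebra
  also have "c * (2*K - N) * ((N - 1) * (N - 2)) = c * (2*K - N) / N * (N * ((N - 1) * (N - 2)))"
    using div_cancel2[OF n0(2)] by simp
  finally show ?thesis .
qed


lemma div2_cancel:
  fixes p q M D1 D2 :: real
  assumes "D1 \<noteq> 0" "D2 \<noteq> 0"
  shows "(p / D1 + q / D2) * (M * D1 * D2) = p * M * D2 + q * M * D1"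
  using assms by (simp add: field_simps)

lemma Bd_ineq:
  assumes n4: "4 \<le> n" and k2: "2 \<le> k" and kn: "k \<le> n" and nk: "n \<le> 2 * k"
  shows "Bd (n - 2) k + Bd (n - 2) (k - 2) \<le> Bd n k"
    and "5 \<le> n \<Longrightarrow> n + 2 \<le> 2 * k \<Longrightarrow> k < n \<Longrightarrow> Bd (n - 2) k + Bd (n - 2) (k - 2) < Bd n k"
proof -
  define N K c A B where "N = real n" "K = real k" "c = real (n choose k)"
    "A = real ((n - 2) choose k)" "B = real ((n - 2) choose (k - 2))"
  have hA: "A * (N * (N - 1)) = c * (N - K) * (N - K - 1)"
    using bin1[of n k] n4 kn unfolding N_K_c_A_B_def by simp
  have hB: "B * (N * (N - 1)) = c * K * (K - 1)"
    using bin2[of n k] n4 k2 unfolding N_K_c_A_B_def by simp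
  have c0: "c > 0" using kn unfolding N_K_c_A_B_def by simp
  have N4: "N \<ge> 4" and K2: "K \<ge> 2" and KN: "K \<le> N" and NK: "N \<le> 2 * K"
    using n4 k2 kn nk unfolding N_K_c_A_B_def by auto
  have rn2: "real (n - 2) = N - 2" and rk2: "real (k - 2) = K - 2"
    using n4 k2 unfolding N_K_c_A_B_def by (auto simp: of_nat_diff)
  have BdA: "Bd (n - 2) k = A * (2 * K - N + 2) / (N - 2)"
  proof -
    have "2 * k \<noteq> n - 2" using nk n4 by auto
    moreover have "\<bar>2 * K - (N - 2)\<bar> = 2 * K - N + 2" using NK by auto
    ultimately show ?thesis unfolding Bd_def using rn2 unfolding N_K_c_A_B_def by simp
  qed
  have BdB1: "Bd (n - 2) (k - 2) = B / (N - 3)" if "2 * k = n + 2"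
  proof -
    have "2 * (k - 2) = n - 2" using that by auto
    then show ?thesis unfolding Bd_def using rn2 unfolding N_K_c_A_B_def by simp
  qed
  have BdB2: "Bd (n - 2) (k - 2) = B * \<bar>2 * K - N - 2\<bar> / (N - 2)" if "2 * k \<noteq> n + 2"
  proof -
    have "2 * (k - 2) \<noteq> n - 2" using that n4 k2 by auto
    moreover have "\<bar>2 * (K - 2) - (N - 2)\<bar> = \<bar>2 * K - N - 2\<bar>" by (simp add: algebra_simps)
    ultimately show ?thesis unfolding Bd_def using rn2 rk2 unfolding N_K_c_A_B_def by simp
  qed
  have Bdn1: "Bd n k = c / (N - 1)" if "2 * k = n"
    using that unfolding Bd_def N_K_c_A_B_def by simp
  have Bdn2: "Bd n k = c * (2 * K - N) / N" if "2 * k \<noteq> n"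
  proof -
    have "\<bar>2 * K - N\<bar> = 2 * K - N" using NK by auto
    then show ?thesis using that unfolding Bd_def N_K_c_A_B_def by simp
  qed
  have main: "Bd (n - 2) k + Bd (n - 2) (k - 2) \<le> Bd n k \<and>
     (5 \<le> n \<longrightarrow> n + 2 \<le> 2 * k \<longrightarrow> k < n \<longrightarrow> Bd (n - 2) k + Bd (n - 2) (k - 2) < Bd n k)"
  proof (cases "n + 3 \<le> 2 * k")
    case True
    then have ne: "2 * k \<noteq> n + 2" "2 * k \<noteq> n" by auto
    have "N + 3 \<le> 2 * K" using True unfolding N_K_c_A_B_def by linarith
    then have ab: "\<bar>2 * K - N - 2\<bar> = 2 * K - N - 2" by auto
    have D: "N * ((N - 1) * (N - 2)) > 0" using N4 by auto
    have eq: "(Bd (n - 2) k + Bd (n - 2) (k - 2)) * (N * ((N - 1) * (N - 2))) =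
        Bd n k * (N * ((N - 1) * (N - 2))) - 2 * c * (2*K - N) * K * (N - K)"
      using Bd_ineq_gen[OF _ hA hB] N4 unfolding BdA BdB2[OF ne(1)] Bdn2[OF ne(2)] ab
      by (simp add: mult.assoc)
    have p: "2 * c * (2*K - N) * K * (N - K) \<ge> 0" using c0 K2 KN NK by simp
    have "(Bd (n - 2) k + Bd (n - 2) (k - 2)) * (N * ((N - 1) * (N - 2))) \<le>
        Bd n k * (N * ((N - 1) * (N - 2)))" using eq p by linarith
    then have le: "Bd (n - 2) k + Bd (n - 2) (k - 2) \<le> Bd n k" by (rule le_by_mult[OF D])
    have lt: "Bd (n - 2) k + Bd (n - 2) (k - 2) < Bd n k" if "k < n"
    proof -
      have "K < N" using that unfolding N_K_c_A_B_def by simp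
      then have "2 * c * (2*K - N) * K * (N - K) > 0" using c0 K2 \<open>N + 3 \<le> 2 * K\<close> by (intro mult_pos_pos) auto
      then have "(Bd (n - 2) k + Bd (n - 2) (k - 2)) * (N * ((N - 1) * (N - 2))) <
          Bd n k * (N * ((N - 1) * (N - 2)))" using eq by linarith
      then show ?thesis by (rule lt_by_mult[OF D])
    qed
    show ?thesis using le lt by blast
  next
    case False
    then consider "2 * k = n + 2" | "2 * k = n + 1" | "2 * k = n" using nk by linarith
    then show ?thesis
    proof cases
      case 1
      then have NN: "N = 2 * K - 2" unfolding N_K_c_A_B_def by linarith
      have K3: "K \<ge> 3" using NN N4 by linarith
      have ne: "2 * k \<noteq> n" using 1 by auto
      have D: "(N * (N - 1) * (N - 2) * (N - 3)) > 0" using N4 by (intro mult_pos_pos) auto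
      have "(Bd (n - 2) k + Bd (n - 2) (k - 2)) * ((N * (N - 1)) * (N - 2) * (N - 3))
          = A * (2 * K - N + 2) * (N * (N - 1)) * (N - 3) + B * (N * (N - 1)) * (N - 2)"
        unfolding BdA BdB1[OF 1]
        using div2_cancel[of "N - 2" "N - 3" "A * (2 * K - N + 2)" B "N * (N - 1)"] N4 by simp
      also have "\<dots> = (2 * K - N + 2) * (A * (N * (N - 1))) * (N - 3) + (B * (N * (N - 1))) * (N - 2)"
        by (simp add: algebra_simps)
      also have "\<dots> = Bd n k * (N * (N - 1) * (N - 2) * (N - 3)) - 6 * c * K * (K - 2) * (K - 3)"
      proof -
        have "N \<noteq> 0" using N4 by auto
        then have "c * (2 * K - N) / N * (N * ((N - 1) * (N - 2) * (N - 3))) = c * (2 * K - N) * ((N - 1) * (N - 2) * (N - 3))"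
          by (rule div_cancel2)
        then have "c * (2 * K - N) / N * (N * (N - 1) * (N - 2) * (N - 3)) = c * (2 * K - N) * (N - 1) * (N - 2) * (N - 3)"
          by (simp only: mult.assoc)
        moreover have "(2 * K - N + 2) * (c * (N - K) * (N - K - 1)) * (N - 3) + c * K * (K - 1) * (N - 2)
            = c * (2 * K - N) * (N - 1) * (N - 2) * (N - 3) - 6 * c * K * (K - 2) * (K - 3)"
          unfolding NN by algebra
        ultimately show ?thesis unfolding hA hB Bdn2[OF ne] by simp
      qed
      finally have eq: "(Bd (n - 2) k + Bd (n - 2) (k - 2)) * (N * (N - 1) * (N - 2) * (N - 3)) =
          Bd n k * (N * (N - 1) * (N - 2) * (N - 3)) - 6 * c * K * (K - 2) * (K - 3)" .
      have p: "6 * c * K * (K - 2) * (K - 3) \<ge> 0" using c0 K3 by (intro mult_nonneg_nonneg) auto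
      have le: "Bd (n - 2) k + Bd (n - 2) (k - 2) \<le> Bd n k"
        by (rule le_by_mult[OF D]) (use eq p in linarith)
      have lt: "Bd (n - 2) k + Bd (n - 2) (k - 2) < Bd n k" if "5 \<le> n"
      proof -
        have "N \<ge> 5" using that unfolding N_K_c_A_B_def by simp
        then have "K > 3" using NN by linarith
        then have pos6: "6 * c * K * (K - 2) * (K - 3) > 0" using c0 by (intro mult_pos_pos) auto
        show ?thesis by (rule lt_by_mult[OF D]) (use eq pos6 in linarith)
      qed
      show ?thesis using le lt by blast
    next
      case 2
      then have NN: "N = 2 * K - 1" unfolding N_K_c_A_B_def by linarith
      have ne: "2 * k \<noteq> n + 2" "2 * k \<noteq> n" using 2 by auto
      have ab: "\<bar>2 * K - N - 2\<bar> = 1" using NN by simp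
      have D: "N * ((N - 1) * (N - 2)) > 0" using N4 by auto
      have eq: "(Bd (n - 2) k + Bd (n - 2) (k - 2)) * (N * ((N - 1) * (N - 2))) =
          Bd n k * (N * ((N - 1) * (N - 2)))"
      proof -
        have n0: "N - 2 \<noteq> 0" "N \<noteq> 0" using N4 by auto
        have "(Bd (n - 2) k + Bd (n - 2) (k - 2)) * (N * ((N - 1) * (N - 2))) =
            (A * (N * (N - 1))) * (2 * K - N + 2) + (B * (N * (N - 1)))"
          unfolding BdA BdB2[OF ne(1)] ab
          using div_sum_cancel[OF n0(1), of "A * (2*K - N + 2)" "B * 1" "N * (N - 1)"]
          by (simp add: algebra_simps)
        also have "\<dots> = c * ((N - 1) * (N - 2))" unfolding hA hB unfolding NN by algebra
        also have "\<dots> = c * (2 * K - N) / N * (N * ((N - 1) * (N - 2)))"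
          using div_cancel2[OF n0(2), of "c * (2 * K - N)" "(N - 1) * (N - 2)"] NN by simp
        finally show ?thesis unfolding Bdn2[OF ne(2)] .
      qed
      have le: "Bd (n - 2) k + Bd (n - 2) (k - 2) \<le> Bd n k"
        by (rule le_by_mult[OF D]) (use eq in linarith)
      show ?thesis using le 2 by auto
    next
      case 3
      then have NN: "N = 2 * K" unfolding N_K_c_A_B_def by linarith
      have ne: "2 * k \<noteq> n + 2" using 3 by auto
      have ab: "\<bar>2 * K - N - 2\<bar> = 2" using NN by simp
      have D: "N * ((N - 1) * (N - 2)) > 0" using N4 by auto
      have eq: "(Bd (n - 2) k + Bd (n - 2) (k - 2)) * (N * ((N - 1) * (N - 2))) =
          Bd n k * (N * ((N - 1) * (N - 2)))"
      proof -
        have n0: "N - 2 \<noteq> 0" "N - 1 \<noteq> 0" using N4 by auto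
        have "(Bd (n - 2) k + Bd (n - 2) (k - 2)) * (N * ((N - 1) * (N - 2))) =
            (A * (N * (N - 1))) * (2 * K - N + 2) + (B * (N * (N - 1))) * 2"
          unfolding BdA BdB2[OF ne] ab
          using div_sum_cancel[OF n0(1), of "A * (2*K - N + 2)" "B * 2" "N * (N - 1)"]
          by (simp add: algebra_simps)
        also have "\<dots> = c * N * (N - 2)" unfolding hA hB unfolding NN by algebra
        also have "\<dots> = c / (N - 1) * (N * ((N - 1) * (N - 2)))" using n0 by (simp add: field_simps)
        finally show ?thesis unfolding Bdn1[OF 3] .
      qed
      have le: "Bd (n - 2) k + Bd (n - 2) (k - 2) \<le> Bd n k"
        by (rule le_by_mult[OF D]) (use eq in linarith)
      show ?thesis using le 3 by auto
    qed
  qed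
  then show "Bd (n - 2) k + Bd (n - 2) (k - 2) \<le> Bd n k"
    and "5 \<le> n \<Longrightarrow> n + 2 \<le> 2 * k \<Longrightarrow> k < n \<Longrightarrow> Bd (n - 2) k + Bd (n - 2) (k - 2) < Bd n k"
    by auto
qed

lemma Bd_nonneg: "2 \<le> n \<Longrightarrow> Bd n k \<ge> 0"
  unfolding Bd_def by auto

lemma Bd_sym: assumes "k \<le> n" shows "Bd n (n - k) = Bd n k"
proof -
  have c: "n choose (n - k) = n choose k" using assms by (rule binomial_symmetric[symmetric])
  have e: "2 * (n - k) = n \<longleftrightarrow> 2 * k = n" using assms by auto
  have a: "\<bar>2 * real (n - k) - real n\<bar> = \<bar>2 * real k - real n\<bar>" using assms by (simp add: of_nat_diff)
  show ?thesis unfolding Bd_def c e a ..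
qed

lemma KW_bound1:
  assumes "finite U" "card (S \<inter> U) = 1"
  shows "\<bar>KW U S k\<bar> \<le> Bd (card U) k"
proof -
  obtain a where a: "S \<inter> U = {a}" using assms(2) card_1_singletonE by blast
  have n1: "card U \<ge> 1" using a assms(1) by (metis Int_lower2 card_mono assms(2))
  have kw: "KW U S k = real (card U choose k) * (real (card U) - 2 * real k) / real (card U)"
    by (rule KW_single[OF assms(1) a])
  show ?thesis
  proof (cases "2 * k = card U")
    case True
    then have "real (card U) - 2 * real k = 0" by linarith
    then have "KW U S k = 0" unfolding kw by simp
    moreover have "Bd (card U) k \<ge> 0" unfolding Bd_def using True n1 by simp
    ultimately show ?thesis by simp
  next
    case False
    have "\<bar>KW U S k\<bar> = real (card U choose k) * \<bar>real (card U) - 2 * real k\<bar> / real (card U)"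
      unfolding kw by (simp add: abs_mult)
    also have "\<bar>real (card U) - 2 * real k\<bar> = \<bar>2 * real k - real (card U)\<bar>" by simp
    finally show ?thesis unfolding Bd_def using False by simp
  qed
qed

lemma card_Int_compl:
  assumes "finite U" shows "card ((U - S) \<inter> U) = card U - card (S \<inter> U)"
proof -
  have "(U - S) \<inter> U = U - (S \<inter> U)" by auto
  then show ?thesis using assms by (simp add: card_Diff_subset)
qed

lemma KW_step:
  assumes "finite U" "2 \<le> card (S \<inter> U)" "card (S \<inter> U) + 2 \<le> card U" "2 \<le> k"
  obtains U' where "finite U'" "card U' = card U - 2" "card (S \<inter> U') = card (S \<inter> U) - 1"
    "KW U S k = KW U' S k - KW U' S (k - 2)"
proof -
  have "S \<inter> U \<noteq> {}" using assms(2) by auto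
  then obtain a where a: "a \<in> S \<inter> U" by blast
  have "U - S \<noteq> {}"
  proof
    assume "U - S = {}"
    then have "U = S \<inter> U" by auto
    then have "card U = card (S \<inter> U)" by simp
    then show False using assms(3) by linarith
  qed
  then obtain b where b: "b \<in> U - S" by auto
  define U' where "U' = U - {a, b}"
  have fin: "finite U'" using assms(1) unfolding U'_def by auto
  have U: "U = insert a (insert b U')" using a b unfolding U'_def by auto
  have ab: "a \<noteq> b" using a b by auto
  have nU: "a \<notin> U'" "b \<notin> U'" unfolding U'_def by auto
  have cU: "card U' = card U - 2" using a b ab assms(1) unfolding U'_def by (simp add: card_Diff_subset)
  have "S \<inter> U = insert a (S \<inter> U')" using a b unfolding U'_def by auto
  then have cS: "card (S \<inter> U') = card (S \<inter> U) - 1" using fin nU by simp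
  have "KW U S k = KW U' S k - KW U' S (k - 2)"
    unfolding U by (rule KW_two[OF fin]) (use a b nU assms in auto)
  then show ?thesis using that fin cU cS by blast
qed

lemma KW_bound:
  assumes "finite U" "1 \<le> card (S \<inter> U)" "card (S \<inter> U) < card U"
  shows "\<bar>KW U S k\<bar> \<le> Bd (card U) k"
  using assms
proof (induction "card U" arbitrary: U S k rule: less_induct)
  case less
  define n where "n = card U"
  define s where "s = card (S \<inter> U)"
  have n2: "2 \<le> n" using less.prems unfolding n_def by linarith
  show ?case
  proof (cases "k \<le> n")
    case False
    then show ?thesis using KW_big[OF less.prems(1)] Bd_nonneg[OF n2] unfolding n_def by simp
  next
    case kn: True
    show ?thesis
    proof (cases "s = 1")
      case True
      then show ?thesis using KW_bound1[OF less.prems(1)] unfolding s_def by blast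
    next
      case s1: False
      show ?thesis
      proof (cases "s + 1 = n")
        case True
        have "card ((U - S) \<inter> U) = 1" using card_Int_compl[OF less.prems(1), of S] True
          unfolding s_def n_def by simp
        then have "\<bar>KW U (U - S) k\<bar> \<le> Bd (card U) k" by (rule KW_bound1[OF less.prems(1)])
        then show ?thesis using KW_compl_S[OF less.prems(1), of S k] by (simp add: abs_mult)
      next
        case False
        then have s2: "2 \<le> s" "s + 2 \<le> n" using s1 less.prems unfolding s_def n_def by auto
        have key: "\<bar>KW U S k'\<bar> \<le> Bd n k'" if "k' \<le> n" "n \<le> 2 * k'" for k'
        proof -
          have k2: "2 \<le> k'" using that s2 by linarith
          obtain U' where U': "finite U'" "card U' = n - 2" "card (S \<inter> U') = s - 1"
            "KW U S k' = KW U' S k' - KW U' S (k' - 2)"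
            using KW_step[OF less.prems(1), of S k'] s2 k2 unfolding s_def n_def by auto
          have lt: "card U' < card U" using U'(2) n2 unfolding n_def by simp
          have b1: "\<bar>KW U' S k'\<bar> \<le> Bd (n - 2) k'"
            using less.hyps[OF lt U'(1)] U' s2 by auto
          have b2: "\<bar>KW U' S (k' - 2)\<bar> \<le> Bd (n - 2) (k' - 2)"
            using less.hyps[OF lt U'(1)] U' s2 by auto
          have "\<bar>KW U S k'\<bar> \<le> Bd (n - 2) k' + Bd (n - 2) (k' - 2)"
            unfolding U'(4) using b1 b2 by linarith
          also have "\<dots> \<le> Bd n k'" by (rule Bd_ineq(1)) (use s2 k2 that in auto)
          finally show ?thesis .
        qed
        show ?thesis
        proof (cases "n \<le> 2 * k")
          case True
          then show ?thesis using key kn unfolding n_def by blast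
        next
          case False
          have "KW U S (n - (n - k)) = (-1) ^ s * KW U S (n - k)"
            using KW_compl_k[OF less.prems(1), of "n - k" S] unfolding n_def s_def by (simp add: Int_commute)
          then have "\<bar>KW U S k\<bar> = \<bar>KW U S (n - k)\<bar>" using kn by (simp add: abs_mult)
          also have "\<dots> \<le> Bd n (n - k)" using key[of "n - k"] False by auto
          also have "\<dots> = Bd n k" using Bd_sym kn by blast
          finally show ?thesis unfolding n_def .
        qed
      qed
    qed
  qed
qed

lemma KW_strict:
  assumes "finite U" "2 \<le> card (S \<inter> U)" "card (S \<inter> U) + 2 \<le> card U"
    "5 \<le> card U" "card U + 2 \<le> 2 * k" "k < card U"
  shows "\<bar>KW U S k\<bar> < Bd (card U) k"
proof -
  obtain U' where U': "finite U'" "card U' = card U - 2" "card (S \<inter> U') = card (S \<inter> U) - 1"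
    "KW U S k = KW U' S k - KW U' S (k - 2)"
    using KW_step[OF assms(1-3), of k] assms by auto
  have b1: "\<bar>KW U' S k\<bar> \<le> Bd (card U - 2) k"
    using KW_bound[OF U'(1), of S k] U' assms by auto
  have b2: "\<bar>KW U' S (k - 2)\<bar> \<le> Bd (card U - 2) (k - 2)"
    using KW_bound[OF U'(1), of S "k - 2"] U' assms by auto
  have "\<bar>KW U S k\<bar> \<le> Bd (card U - 2) k + Bd (card U - 2) (k - 2)"
    unfolding U'(4) using b1 b2 by linarith
  also have "\<dots> < Bd (card U) k" by (rule Bd_ineq(2)) (use assms in auto)
  finally show ?thesis .
qed

lemma KW_lower:
  assumes "even k" "n + 2 \<le> 2 * k" "k < n" "S \<subseteq> {..<n}"
  shows "KW {..<n} S k \<ge> real (n choose k) * (real n - 2 * real k) / real n"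
    and "KW {..<n} S k = real (n choose k) * (real n - 2 * real k) / real n \<Longrightarrow>
         card S = 1 \<or> card S = n - 1"
proof -
  define K1 where "K1 = real (n choose k) * (real n - 2 * real k) / real n"
  have n5: "5 \<le> n"
  proof (rule ccontr)
    assume "\<not> 5 \<le> n"
    then have "n = 4 \<and> k = 3" using assms(2,3) by linarith
    then show False using assms(1) by simp
  qed
  have SU: "S \<inter> {..<n} = S" using assms(4) by auto
  have cU: "card {..<n} = n" by simp
  have c0: "real (n choose k) > 0" using assms(3) by simp
  have K1neg: "K1 < 0"
  proof -
    have "real n - 2 * real k < 0" using assms(2) by linarith
    then show ?thesis unfolding K1_def using c0 n5 by (simp add: divide_neg_pos mult_pos_neg)
  qed
  have BdK: "Bd n k = - K1"
  proof -
    have "2 * k \<noteq> n" using assms(2) by auto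
    moreover have "\<bar>2 * real k - real n\<bar> = - (real n - 2 * real k)" using assms(2) by linarith
    ultimately show ?thesis unfolding Bd_def K1_def by (simp add: algebra_simps minus_divide_left)
  qed
  have res: "KW {..<n} S k \<ge> K1 \<and> (KW {..<n} S k = K1 \<longrightarrow> card S = 1 \<or> card S = n - 1)"
  proof -
    have cS: "card S \<le> n" using assms(4) by (metis card_lessThan card_mono finite_lessThan)
    consider "card S = 0" | "card S = 1" | "card S = n - 1" | "card S = n"
      | "2 \<le> card S \<and> card S + 2 \<le> n" using cS by linarith
    then show ?thesis
    proof cases
      case 1
      then have "S = {}" using assms(4) by (meson finite_lessThan finite_subset card_0_eq)
      then have "KW {..<n} S k = real (n choose k)" using KW_disj[of "{..<n}" S k] by simp
      then show ?thesis using c0 K1neg by auto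
    next
      case 2
      then have "KW {..<n} S k = K1" using KW_single[of "{..<n}" S] SU
        unfolding K1_def by (metis card_1_singletonE card_lessThan finite_lessThan)
      then show ?thesis using 2 by simp
    next
      case 3
      have "card (({..<n} - S) \<inter> {..<n}) = 1"
        using card_Int_compl[of "{..<n}" S] 3 n5 SU by simp
      then obtain a where a: "({..<n} - S) \<inter> {..<n} = {a}" by (metis card_1_singletonE)
      have "KW {..<n} S k = (-1) ^ k * KW {..<n} ({..<n} - S) k" by (rule KW_compl_S) simp
      also have "\<dots> = K1" using KW_single[OF _ a, of k] assms(1) unfolding K1_def by simp
      finally show ?thesis using 3 by simp
    next
      case 4
      then have "S = {..<n}" using assms(4) by (metis card_lessThan card_subset_eq finite_lessThan)
      then have "KW {..<n} S k = (-1) ^ k * KW {..<n} {} k" using KW_compl_S[of "{..<n}" S k] by simp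
      also have "\<dots> = real (n choose k)" using KW_disj[of "{..<n}" "{}" k] assms(1) by simp
      finally show ?thesis using c0 K1neg by auto
    next
      case 5
      have "\<bar>KW {..<n} S k\<bar> < Bd n k"
        using KW_strict[of "{..<n}" S k] 5 SU n5 assms by simp
      then have "KW {..<n} S k > K1" unfolding BdK by linarith
      then show ?thesis by simp
    qed
  qed
  then show "KW {..<n} S k \<ge> real (n choose k) * (real n - 2 * real k) / real n"
    and "KW {..<n} S k = real (n choose k) * (real n - 2 * real k) / real n \<Longrightarrow>
         card S = 1 \<or> card S = n - 1" unfolding K1_def by auto
qed

definition ch :: "nat set \<Rightarrow> nat set \<Rightarrow> real" where
  "ch S x = (-1) ^ card (S \<inter> x)"

definition sd :: "nat set \<Rightarrow> nat set \<Rightarrow> nat set" where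
  "sd x y = (x - y) \<union> (y - x)"

lemma ch_sym: "ch S x = ch x S"
  unfolding ch_def by (simp add: Int_commute)

lemma ch_sq: "ch S x * ch S x = 1"
  unfolding ch_def by (simp flip: power_mult_distrib)

lemma card_sd:
  assumes "finite A" "finite B"
  shows "card (sd A B) + 2 * card (A \<inter> B) = card A + card B"
proof -
  have u: "A \<union> B = sd A B \<union> (A \<inter> B)" unfolding sd_def by auto
  have d: "sd A B \<inter> (A \<inter> B) = {}" unfolding sd_def by auto
  have "card (A \<union> B) = card (sd A B) + card (A \<inter> B)"
    unfolding u using assms d by (intro card_Un_disjoint) (auto simp: sd_def)
  then show ?thesis using card_Un_Int[OF assms] by simp
qed

lemma neg1_pow_cancel: "(-1::real) ^ (a + 2 * d) = (-1) ^ a"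
  by (simp add: power_add power_mult)

lemma ch_mult:
  assumes "finite S"
  shows "ch S x * ch S y = ch S (sd x y)"
proof -
  have e: "S \<inter> sd x y = sd (S \<inter> x) (S \<inter> y)" unfolding sd_def by auto
  have "card (sd (S \<inter> x) (S \<inter> y)) + 2 * card ((S \<inter> x) \<inter> (S \<inter> y)) = card (S \<inter> x) + card (S \<inter> y)"
    using assms by (intro card_sd) auto
  then have "(-1::real) ^ (card (S \<inter> x) + card (S \<inter> y)) = (-1) ^ card (S \<inter> sd x y)"
    unfolding e by (metis neg1_pow_cancel)
  then show ?thesis unfolding ch_def by (simp add: power_add)
qed

lemma ch_mult2:
  assumes "finite x"
  shows "ch S x * ch T x = ch (sd S T) x"
  using ch_mult[OF assms, of S T] by (simp add: ch_sym)

lemma sum_Pow_insert: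
  fixes f :: "nat set \<Rightarrow> real"
  assumes "finite A" "a \<notin> A"
  shows "(\<Sum>S\<in>Pow (insert a A). f S) = (\<Sum>S\<in>Pow A. f S) + (\<Sum>S\<in>Pow A. f (insert a S))"
proof -
  have inj: "inj_on (insert a) (Pow A)"
    using assms(2) unfolding inj_on_def by (metis Pow_iff insert_ident subset_iff)
  have "(\<Sum>S\<in>Pow (insert a A). f S) = (\<Sum>S\<in>Pow A. f S) + (\<Sum>S\<in>insert a ` Pow A. f S)"
    unfolding Pow_insert using assms by (intro sum.union_disjoint) auto
  also have "(\<Sum>S\<in>insert a ` Pow A. f S) = (\<Sum>S\<in>Pow A. f (insert a S))"
    by (simp add: sum.reindex[OF inj])
  finally show ?thesis .
qed

lemma char_sum:
  assumes "finite U" "z \<subseteq> U"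
  shows "(\<Sum>S\<in>Pow U. ch S z) = (if z = {} then 2 ^ card U else 0)"
  using assms
proof (induction U arbitrary: z rule: finite_induct)
  case empty
  then show ?case by (simp add: ch_def)
next
  case (insert a A)
  have ins: "ch (insert a S) z = (if a \<in> z then -1 else 1) * ch S z" if "S \<in> Pow A" for S
  proof -
    have aS: "a \<notin> S" "finite S" using that insert.hyps finite_subset by auto
    show ?thesis
    proof (cases "a \<in> z")
      case True
      then have "insert a S \<inter> z = insert a (S \<inter> z)" by auto
      then show ?thesis unfolding ch_def using True aS by simp
    next
      case False
      then have "insert a S \<inter> z = S \<inter> z" by auto
      then show ?thesis unfolding ch_def using False by simp
    qed
  qed
  have "(\<Sum>S\<in>Pow (insert a A). ch S z) = (\<Sum>S\<in>Pow A. ch S z) + (\<Sum>S\<in>Pow A. ch (insert a S) z)"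
    by (rule sum_Pow_insert[OF insert.hyps(1,2)])
  also have "(\<Sum>S\<in>Pow A. ch (insert a S) z) = (if a \<in> z then -1 else 1) * (\<Sum>S\<in>Pow A. ch S z)"
    using ins by (simp add: sum_distrib_left)
  finally have e: "(\<Sum>S\<in>Pow (insert a A). ch S z) = (1 + (if a \<in> z then -1 else 1)) * (\<Sum>S\<in>Pow A. ch S z)"
    by (simp add: algebra_simps)
  show ?case
  proof (cases "a \<in> z")
    case True
    then show ?thesis unfolding e by auto
  next
    case False
    then have "z \<subseteq> A" using insert.prems by auto
    then show ?thesis unfolding e using insert.IH[of z] insert.hyps by simp
  qed
qed

lemma sd_empty_iff: "sd x y = {} \<longleftrightarrow> x = y"
  unfolding sd_def by auto

lemma sd_sub: "x \<subseteq> U \<Longrightarrow> y \<subseteq> U \<Longrightarrow> sd x y \<subseteq> U"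
  unfolding sd_def by auto

lemma orth_x:
  assumes "finite U" "S \<subseteq> U" "T \<subseteq> U"
  shows "(\<Sum>x\<in>Pow U. ch S x * ch T x) = (if S = T then 2 ^ card U else 0)"
proof -
  have "(\<Sum>x\<in>Pow U. ch S x * ch T x) = (\<Sum>x\<in>Pow U. ch x (sd S T))"
  proof (rule sum.cong[OF refl])
    fix x assume "x \<in> Pow U"
    then have "finite x" using assms(1) finite_subset by auto
    then show "ch S x * ch T x = ch x (sd S T)" using ch_mult2 ch_sym by metis
  qed
  also have "\<dots> = (if S = T then 2 ^ card U else 0)"
    using char_sum[OF assms(1) sd_sub[OF assms(2,3)]] sd_empty_iff by simp
  finally show ?thesis .
qed

lemma orth_S:
  assumes "finite U" "x \<subseteq> U" "y \<subseteq> U"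
  shows "(\<Sum>S\<in>Pow U. ch S x * ch S y) = (if x = y then 2 ^ card U else 0)"
proof -
  have "(\<Sum>S\<in>Pow U. ch S x * ch S y) = (\<Sum>S\<in>Pow U. ch S (sd x y))"
  proof (rule sum.cong[OF refl])
    fix S assume "S \<in> Pow U"
    then have "finite S" using assms(1) finite_subset by auto
    then show "ch S x * ch S y = ch S (sd x y)" by (rule ch_mult)
  qed
  also have "\<dots> = (if x = y then 2 ^ card U else 0)"
    using char_sum[OF assms(1) sd_sub[OF assms(2,3)]] sd_empty_iff by simp
  finally show ?thesis .
qed

lemma swap4:
  fixes f :: "'a \<Rightarrow> 'b \<Rightarrow> 'c \<Rightarrow> 'd \<Rightarrow> real"
  shows "(\<Sum>a\<in>A. \<Sum>b\<in>B. \<Sum>c\<in>C. \<Sum>d\<in>D. f a b c d) = (\<Sum>c\<in>C. \<Sum>d\<in>D. \<Sum>a\<in>A. \<Sum>b\<in>B. f a b c d)"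
proof -
  have "(\<Sum>a\<in>A. \<Sum>b\<in>B. \<Sum>c\<in>C. \<Sum>d\<in>D. f a b c d) = (\<Sum>a\<in>A. \<Sum>c\<in>C. \<Sum>b\<in>B. \<Sum>d\<in>D. f a b c d)"
    by (rule sum.cong[OF refl]) (rule sum.swap)
  also have "\<dots> = (\<Sum>a\<in>A. \<Sum>c\<in>C. \<Sum>d\<in>D. \<Sum>b\<in>B. f a b c d)"
    by (rule sum.cong[OF refl], rule sum.cong[OF refl]) (rule sum.swap)
  also have "\<dots> = (\<Sum>c\<in>C. \<Sum>a\<in>A. \<Sum>d\<in>D. \<Sum>b\<in>B. f a b c d)" by (rule sum.swap)
  also have "\<dots> = (\<Sum>c\<in>C. \<Sum>d\<in>D. \<Sum>a\<in>A. \<Sum>b\<in>B. f a b c d)"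
    by (rule sum.cong[OF refl]) (rule sum.swap)
  finally show ?thesis .
qed

definition FT :: "nat set \<Rightarrow> (nat set \<Rightarrow> nat set \<Rightarrow> real) \<Rightarrow> nat set \<Rightarrow> nat set \<Rightarrow> real" where
  "FT U G S T = (\<Sum>x\<in>Pow U. \<Sum>y\<in>Pow U. ch S x * ch T y * G x y)"

lemma inversion:
  assumes "finite U" "x0 \<subseteq> U" "y0 \<subseteq> U"
  shows "(\<Sum>S\<in>Pow U. \<Sum>T\<in>Pow U. ch S x0 * ch T y0 * FT U G S T) = 2 ^ card U * 2 ^ card U * G x0 y0"
proof -
  have "(\<Sum>S\<in>Pow U. \<Sum>T\<in>Pow U. ch S x0 * ch T y0 * FT U G S T) =
      (\<Sum>S\<in>Pow U. \<Sum>T\<in>Pow U. \<Sum>x\<in>Pow U. \<Sum>y\<in>Pow U. G x y * ((ch S x0 * ch S x) * (ch T y0 * ch T y)))"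
    unfolding FT_def by (simp add: sum_distrib_left mult_ac)
  also have "\<dots> = (\<Sum>x\<in>Pow U. \<Sum>y\<in>Pow U. \<Sum>S\<in>Pow U. \<Sum>T\<in>Pow U. G x y * ((ch S x0 * ch S x) * (ch T y0 * ch T y)))"
    by (rule swap4)
  also have "\<dots> = (\<Sum>x\<in>Pow U. \<Sum>y\<in>Pow U. G x y * ((\<Sum>S\<in>Pow U. ch S x0 * ch S x) * (\<Sum>T\<in>Pow U. ch T y0 * ch T y)))"
    by (simp only: sum_product) (simp only: sum_distrib_left)
  also have "\<dots> = (\<Sum>x\<in>Pow U. \<Sum>y\<in>Pow U. G x y * ((if x0 = x then 2 ^ card U else 0) * (if y0 = y then 2 ^ card U else 0)))"
    using orth_S[OF assms(1)] assms by (intro sum.cong refl) auto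
  also have "\<dots> = (\<Sum>x\<in>Pow U. \<Sum>y\<in>Pow U. (if x = x0 then (if y = y0 then 2 ^ card U * 2 ^ card U * G x0 y0 else 0) else 0))"
    by (intro sum.cong refl) auto
  also have "\<dots> = (\<Sum>x\<in>Pow U. (if x = x0 then 2 ^ card U * 2 ^ card U * G x0 y0 else 0))"
    using assms by (intro sum.cong refl) (simp add: sum.delta')
  also have "\<dots> = 2 ^ card U * 2 ^ card U * G x0 y0"
    using assms by (simp add: sum.delta')
  finally show ?thesis .
qed

lemma diag_fourier:
  assumes "finite U"
  shows "(\<Sum>x\<in>Pow U. G x x) = (\<Sum>S\<in>Pow U. FT U G S S) / 2 ^ card U"
proof -
  have "(\<Sum>x\<in>Pow U. G x x) = (\<Sum>x\<in>Pow U. (\<Sum>S\<in>Pow U. \<Sum>T\<in>Pow U. ch S x * ch T x * FT U G S T) / (2 ^ card U * 2 ^ card U))"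
    using inversion[OF assms] by (intro sum.cong refl) simp
  also have "\<dots> = (\<Sum>S\<in>Pow U. \<Sum>T\<in>Pow U. FT U G S T * (\<Sum>x\<in>Pow U. ch S x * ch T x)) / (2 ^ card U * 2 ^ card U)"
  proof -
    have "(\<Sum>x\<in>Pow U. \<Sum>S\<in>Pow U. \<Sum>T\<in>Pow U. ch S x * ch T x * FT U G S T) =
          (\<Sum>S\<in>Pow U. \<Sum>T\<in>Pow U. \<Sum>x\<in>Pow U. ch S x * ch T x * FT U G S T)"
      by (subst sum.swap) (rule sum.cong[OF refl], rule sum.swap)
    then show ?thesis by (simp add: sum_divide_distrib[symmetric] sum_distrib_left mult_ac)
  qed
  also have "\<dots> = (\<Sum>S\<in>Pow U. \<Sum>T\<in>Pow U. FT U G S T * (if S = T then 2 ^ card U else 0)) / (2 ^ card U * 2 ^ card U)"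
    using orth_x[OF assms] by (intro arg_cong[where f = "\<lambda>t. t / _"] sum.cong refl) auto
  also have "\<dots> = (\<Sum>S\<in>Pow U. \<Sum>T\<in>Pow U. if S = T then FT U G S S * 2 ^ card U else 0) / (2 ^ card U * 2 ^ card U)"
    by (intro arg_cong[where f = "\<lambda>t. t / _"] sum.cong refl) auto
  also have "\<dots> = (\<Sum>S\<in>Pow U. FT U G S S * 2 ^ card U) / (2 ^ card U * 2 ^ card U)"
    by (intro arg_cong[where f = "\<lambda>t. t / _"] sum.cong refl) (simp add: sum.delta sum.delta' assms)
  also have "\<dots> = (\<Sum>S\<in>Pow U. FT U G S S) / 2 ^ card U"
    by (simp add: sum_distrib_right[symmetric])
  finally show ?thesis .
qed

lemma edge_fourier:
  assumes "finite U"
  shows "(\<Sum>x\<in>Pow U. \<Sum>T\<in>{T. T \<subseteq> U \<and> card T = k}. G x (sd x T)) =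
     (\<Sum>S\<in>Pow U. FT U G S S * KW U S k) / 2 ^ card U"
proof -
  define Tk where "Tk = {T. T \<subseteq> U \<and> card T = k}"
  have ch_sd: "ch R (sd x T) = ch R x * ch R T" if "R \<in> Pow U" for R x T
  proof -
    have "finite R" using that assms finite_subset by auto
    then show ?thesis using ch_mult by simp
  qed
  have "(\<Sum>x\<in>Pow U. \<Sum>T\<in>Tk. G x (sd x T)) =
      (\<Sum>x\<in>Pow U. \<Sum>T\<in>Tk. (\<Sum>S\<in>Pow U. \<Sum>R\<in>Pow U. ch S x * ch R (sd x T) * FT U G S R) / (2 ^ card U * 2 ^ card U))"
    using inversion[OF assms] sd_sub by (intro sum.cong refl) (auto simp: Tk_def)
  also have "\<dots> = (\<Sum>x\<in>Pow U. \<Sum>T\<in>Tk. (\<Sum>S\<in>Pow U. \<Sum>R\<in>Pow U. FT U G S R * ((ch S x * ch R x) * ch R T)) / (2 ^ card U * 2 ^ card U))"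
  proof (intro sum.cong refl arg_cong[where f = "\<lambda>t. t / _"])
    fix x T S R assume "R \<in> Pow U"
    then show "ch S x * ch R (sd x T) * FT U G S R = FT U G S R * ((ch S x * ch R x) * ch R T)"
      using ch_sd by simp
  qed
  also have "\<dots> = (\<Sum>x\<in>Pow U. \<Sum>T\<in>Tk. \<Sum>S\<in>Pow U. \<Sum>R\<in>Pow U. FT U G S R * ((ch S x * ch R x) * ch R T)) / (2 ^ card U * 2 ^ card U)"
    by (simp add: sum_divide_distrib)
  also have "(\<Sum>x\<in>Pow U. \<Sum>T\<in>Tk. \<Sum>S\<in>Pow U. \<Sum>R\<in>Pow U. FT U G S R * ((ch S x * ch R x) * ch R T)) =
      (\<Sum>S\<in>Pow U. \<Sum>R\<in>Pow U. \<Sum>x\<in>Pow U. \<Sum>T\<in>Tk. FT U G S R * ((ch S x * ch R x) * ch R T))"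
    by (rule swap4)
  also have "\<dots> = (\<Sum>S\<in>Pow U. \<Sum>R\<in>Pow U. FT U G S R * ((\<Sum>x\<in>Pow U. ch S x * ch R x) * (\<Sum>T\<in>Tk. ch R T)))"
    by (simp only: sum_product) (simp only: sum_distrib_left)
  also have "\<dots> = (\<Sum>S\<in>Pow U. \<Sum>R\<in>Pow U. FT U G S R * ((if S = R then 2 ^ card U else 0) * KW U R k))"
    using orth_x[OF assms] unfolding KW_def Tk_def ch_def by (intro sum.cong refl) auto
  also have "\<dots> = (\<Sum>S\<in>Pow U. \<Sum>R\<in>Pow U. if S = R then FT U G S S * (2 ^ card U * KW U S k) else 0)"
    by (intro sum.cong refl) auto
  also have "\<dots> = (\<Sum>S\<in>Pow U. FT U G S S * (2 ^ card U * KW U S k))"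
    by (intro sum.cong refl) (simp add: sum.delta sum.delta' assms)
  finally have e: "(\<Sum>x\<in>Pow U. \<Sum>T\<in>Tk. G x (sd x T)) =
     (\<Sum>S\<in>Pow U. FT U G S S * (2 ^ card U * KW U S k)) / (2 ^ card U * 2 ^ card U)" .
  have "(\<Sum>S\<in>Pow U. FT U G S S * (2 ^ card U * KW U S k)) = 2 ^ card U * (\<Sum>S\<in>Pow U. FT U G S S * KW U S k)"
    by (simp add: sum_distrib_left mult_ac)
  then show ?thesis using e unfolding Tk_def by simp
qed

definition w :: "nat \<Rightarrow> nat set \<Rightarrow> real" where
  "w j y = (if j \<in> y then -1 else 1)"

lemma w_sq: "w j y * w j y = 1" unfolding w_def by simp

lemma w_sd: "w j (sd x T) = w j x * w j T" unfolding w_def sd_def by auto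

lemma sum_w:
  assumes "z \<subseteq> {..<n}"
  shows "(\<Sum>j<n. w j z) = real n - 2 * real (card z)"
proof -
  have "(\<Sum>j<n. w j z) = (\<Sum>j<n. 1 - 2 * (if j \<in> z then 1 else 0))"
    unfolding w_def by (intro sum.cong refl) auto
  also have "\<dots> = real n - 2 * (\<Sum>j<n. (if j \<in> z then 1 else 0))"
    by (simp add: sum_subtractf sum_distrib_left)
  also have "(\<Sum>j<n. (if j \<in> z then 1 else 0)) = real (card ({..<n} \<inter> z))"
    by (simp add: sum.If_cases)
  also have "{..<n} \<inter> z = z" using assms by auto
  finally show ?thesis .
qed

lemma sum_wT:
  assumes "T \<subseteq> {..<n}"
  shows "(\<Sum>j<n. c j * w j T) = (\<Sum>j<n. c j) - 2 * (\<Sum>j\<in>T. c j)"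
proof -
  have "(\<Sum>j<n. c j * w j T) = (\<Sum>j<n. c j - 2 * (if j \<in> T then c j else 0))"
    unfolding w_def by (intro sum.cong refl) auto
  also have "\<dots> = (\<Sum>j<n. c j) - 2 * (\<Sum>j<n. (if j \<in> T then c j else 0))"
    by (simp add: sum_subtractf sum_distrib_left)
  also have "(\<Sum>j<n. (if j \<in> T then c j else 0)) = (\<Sum>j\<in>{..<n} \<inter> T. c j)"
    by (simp add: sum.If_cases)
  also have "{..<n} \<inter> T = T" using assms by auto
  finally show ?thesis .
qed

lemma all_equal:
  fixes c :: "nat \<Rightarrow> real"
  assumes "\<And>T. T \<subseteq> {..<n} \<Longrightarrow> card T = k \<Longrightarrow> sum c T = C0" "1 \<le> k" "k < n"
    and "i < n" "j < n"
  shows "c i = c j"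
proof (cases "i = j")
  case False
  have "k - 1 \<le> card ({..<n} - {i, j})" using assms False by (simp add: card_Diff_subset)
  then obtain T0 where T0: "T0 \<subseteq> {..<n} - {i, j}" "card T0 = k - 1" "finite T0"
    by (meson obtain_subset_with_card_n)
  have nin: "i \<notin> T0" "j \<notin> T0" using T0 by auto
  have "sum c (insert i T0) = C0" using assms T0 nin by (intro assms(1)) auto
  moreover have "sum c (insert j T0) = C0" using assms T0 nin by (intro assms(1)) auto
  moreover note nin
  ultimately show ?thesis using T0(3) by simp
qed simp

lemma per_x:
  fixes b :: "nat \<Rightarrow> real" and g :: "nat set \<Rightarrow> real"
  assumes x0: "x0 \<subseteq> {..<n}" and k: "1 \<le> k" "k < n"
    and rep: "\<And>y. y \<in> Y \<Longrightarrow> g y = (\<Sum>j<n. b j * w j y)"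
    and x0Y: "x0 \<in> Y" and g1: "g x0 = 1"
    and gT: "\<And>T. T \<subseteq> {..<n} \<Longrightarrow> card T = k \<Longrightarrow> sd x0 T \<in> Y \<and> g (sd x0 T) = - al"
    and y: "y \<in> Y" "y \<subseteq> {..<n}"
  shows "g y = 1 - 2 * real (card (sd x0 y)) / real n"
proof -
  define c where "c j = b j * w j x0" for j
  have bc: "b j = c j * w j x0" for j unfolding c_def using w_sq[of j x0] by (simp add: mult.assoc)
  have s1: "(\<Sum>j<n. c j) = 1" using rep[OF x0Y] g1 unfolding c_def by simp
  have sT: "sum c T = (1 + al) / 2" if "T \<subseteq> {..<n}" "card T = k" for T
  proof -
    have "- al = (\<Sum>j<n. b j * w j (sd x0 T))" using gT[OF that] rep by auto
    also have "\<dots> = (\<Sum>j<n. c j * w j T)" unfolding w_sd c_def by (simp add: mult_ac)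
    also have "\<dots> = 1 - 2 * sum c T" using sum_wT[OF that(1)] s1 by simp
    finally show ?thesis by simp
  qed
  have eq: "c j = c 0" if "j < n" for j
    by (rule all_equal[of n k c "(1 + al) / 2" j 0]) (use sT k that in auto)
  have "(\<Sum>j<n. c j) = (\<Sum>j<n. c 0)" by (rule sum.cong) (auto intro: eq)
  then have "(\<Sum>j<n. c j) = real n * c 0" by simp
  then have c0: "c 0 = 1 / real n" using s1 k by (simp add: field_simps)
  have "g y = (\<Sum>j<n. c j * (w j x0 * w j y))" unfolding rep[OF y(1)] bc by (simp add: mult_ac)
  also have "\<dots> = (\<Sum>j<n. (1 / real n) * w j (sd x0 y))"
  proof (rule sum.cong[OF refl])
    fix j assume "j \<in> {..<n}"
    then have "c j = 1 / real n" using eq c0 by auto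
    then show "c j * (w j x0 * w j y) = 1 / real n * w j (sd x0 y)" by (simp add: w_sd)
  qed
  also have "\<dots> = (1 / real n) * (real n - 2 * real (card (sd x0 y)))"
    using sum_w[OF sd_sub[OF x0 y(2)]] by (simp add: sum_divide_distrib[symmetric])
  also have "\<dots> = 1 - 2 * real (card (sd x0 y)) / real n" using k by (simp add: field_simps)
  finally show ?thesis .
qed

lemma ec_sub: "x \<in> even_cube n \<Longrightarrow> x \<subseteq> {..<n}"
  unfolding even_cube_def by auto

lemma ec_Pow: "even_cube n \<subseteq> Pow {..<n}"
  unfolding even_cube_def by auto

lemma ec_finite: "finite (even_cube n)"
  using ec_Pow finite_subset by (metis finite_Pow_iff finite_lessThan)

lemma ec_empty: "{} \<in> even_cube n"
  unfolding even_cube_def by auto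

lemma hamming_sd: "hamming x y = card (sd x y)"
  unfolding hamming_def sd_def ..

lemma sd_sd: "sd x (sd x T) = T"
  unfolding sd_def by auto

lemma sd_comm: "sd x y = sd y x"
  unfolding sd_def by auto

lemma sd_ec:
  assumes "x \<in> even_cube n" "T \<subseteq> {..<n}" "even (card T)"
  shows "sd x T \<in> even_cube n"
proof -
  have fx: "finite x" "finite T" using assms ec_sub finite_subset by (metis finite_lessThan)+
  have "card (sd x T) + 2 * card (x \<inter> T) = card x + card T" by (rule card_sd[OF fx])
  moreover have "even (card x)" using assms(1) unfolding even_cube_def by auto
  ultimately have "even (card (sd x T))" using assms(3) by presburger
  moreover have "sd x T \<subseteq> {..<n}" using sd_sub[OF ec_sub[OF assms(1)] assms(2)] .
  ultimately show ?thesis unfolding even_cube_def by auto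
qed

lemma inj_sd: "inj_on (sd x) A"
  unfolding inj_on_def by (metis sd_sd)

lemma nbhd:
  assumes "even k" "x \<in> even_cube n"
  shows "{y \<in> even_cube n. hamming x y = k} = sd x ` {T. T \<subseteq> {..<n} \<and> card T = k}"
proof (intro equalityI subsetI)
  fix y assume y: "y \<in> {y \<in> even_cube n. hamming x y = k}"
  then have "sd x y \<in> {T. T \<subseteq> {..<n} \<and> card T = k}"
    using sd_sub[OF ec_sub[OF assms(2)] ec_sub] by (auto simp: hamming_sd)
  moreover have "y = sd x (sd x y)" by (simp add: sd_sd)
  ultimately show "y \<in> sd x ` {T. T \<subseteq> {..<n} \<and> card T = k}" by blast
next
  fix y assume "y \<in> sd x ` {T. T \<subseteq> {..<n} \<and> card T = k}"
  then obtain T where T: "T \<subseteq> {..<n}" "card T = k" "y = sd x T" by auto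
  then show "y \<in> {y \<in> even_cube n. hamming x y = k}"
    using sd_ec[OF assms(2) T(1)] assms(1) by (auto simp: hamming_sd sd_sd)
qed

lemma H_sum:
  assumes "even k"
  shows "(\<Sum>p\<in>H_edges n k. F p) = (\<Sum>x\<in>even_cube n. \<Sum>T\<in>{T. T \<subseteq> {..<n} \<and> card T = k}. F (x, sd x T))"
proof -
  have H: "H_edges n k = Sigma (even_cube n) (\<lambda>x. {y \<in> even_cube n. hamming x y = k})"
    unfolding H_edges_def by auto
  have "(\<Sum>p\<in>H_edges n k. F p) = (\<Sum>x\<in>even_cube n. \<Sum>y\<in>{y \<in> even_cube n. hamming x y = k}. F (x, y))"
    unfolding H using ec_finite by (subst sum.Sigma) auto
  also have "\<dots> = (\<Sum>x\<in>even_cube n. \<Sum>T\<in>{T. T \<subseteq> {..<n} \<and> card T = k}. F (x, sd x T))"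
  proof (rule sum.cong[OF refl])
    fix x assume x: "x \<in> even_cube n"
    show "(\<Sum>y\<in>{y \<in> even_cube n. hamming x y = k}. F (x, y)) = (\<Sum>T\<in>{T. T \<subseteq> {..<n} \<and> card T = k}. F (x, sd x T))"
      unfolding nbhd[OF assms x] by (simp add: sum.reindex[OF inj_sd])
  qed
  finally show ?thesis .
qed

lemma H_card:
  assumes "even k"
  shows "(\<Sum>p\<in>H_edges n k. (1::real)) = real (card (even_cube n)) * real (n choose k)"
  using H_sum[OF assms, of "\<lambda>_. 1::real" n] n_subsets[of "{..<n}" k] by simp

definition ext :: "nat set set \<Rightarrow> (nat set \<Rightarrow> nat set \<Rightarrow> real) \<Rightarrow> nat set \<Rightarrow> nat set \<Rightarrow> real" where
  "ext V G x y = (if x \<in> V \<and> y \<in> V then G x y else 0)"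

lemma restrict2:
  assumes "finite P" "V \<subseteq> P"
  shows "(\<Sum>x\<in>P. \<Sum>y\<in>P. f x y * ext V G x y) = (\<Sum>x\<in>V. \<Sum>y\<in>V. f x y * G x y)"
proof -
  have "(\<Sum>x\<in>P. \<Sum>y\<in>P. f x y * ext V G x y) = (\<Sum>x\<in>P. \<Sum>y\<in>V. f x y * ext V G x y)"
    by (intro sum.cong refl sum.mono_neutral_right) (use assms in \<open>auto simp: ext_def\<close>)
  also have "\<dots> = (\<Sum>x\<in>V. \<Sum>y\<in>V. f x y * ext V G x y)"
    by (intro sum.mono_neutral_right) (use assms in \<open>auto simp: ext_def\<close>)
  also have "\<dots> = (\<Sum>x\<in>V. \<Sum>y\<in>V. f x y * G x y)"
    by (intro sum.cong refl) (auto simp: ext_def)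
  finally show ?thesis .
qed

lemma FT_ext:
  assumes "finite U" "V \<subseteq> Pow U"
  shows "FT U (ext V G) S R = (\<Sum>x\<in>V. \<Sum>y\<in>V. (ch S x * ch R y) * G x y)"
  unfolding FT_def using restrict2[OF _ assms(2), of "\<lambda>x y. ch S x * ch R y" G] assms(1) by simp

definition psd_on :: "nat set set \<Rightarrow> (nat set \<Rightarrow> nat set \<Rightarrow> real) \<Rightarrow> bool" where
  "psd_on V G \<longleftrightarrow> (\<forall>c. 0 \<le> (\<Sum>x\<in>V. \<Sum>y\<in>V. c x * c y * G x y))"

lemma quad_expand:
  fixes u v :: "nat set \<Rightarrow> real"
  shows "(\<Sum>x\<in>V. \<Sum>y\<in>V. (t * u x + v x) * (t * u y + v y) * G x y) =
    t^2 * (\<Sum>x\<in>V. \<Sum>y\<in>V. u x * u y * G x y) + t * ((\<Sum>x\<in>V. \<Sum>y\<in>V. u x * v y * G x y)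
     + (\<Sum>x\<in>V. \<Sum>y\<in>V. v x * u y * G x y)) + (\<Sum>x\<in>V. \<Sum>y\<in>V. v x * v y * G x y)"
proof -
  have "(\<Sum>x\<in>V. \<Sum>y\<in>V. (t * u x + v x) * (t * u y + v y) * G x y) =
    (\<Sum>x\<in>V. \<Sum>y\<in>V. t^2 * (u x * u y * G x y) + t * (u x * v y * G x y) + t * (v x * u y * G x y) + v x * v y * G x y)"
    by (intro sum.cong refl) (simp add: algebra_simps power2_eq_square)
  also have "\<dots> = t^2 * (\<Sum>x\<in>V. \<Sum>y\<in>V. u x * u y * G x y) + t * (\<Sum>x\<in>V. \<Sum>y\<in>V. u x * v y * G x y)
     + t * (\<Sum>x\<in>V. \<Sum>y\<in>V. v x * u y * G x y) + (\<Sum>x\<in>V. \<Sum>y\<in>V. v x * v y * G x y)"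
    by (simp add: sum.distrib sum_distrib_left)
  finally show ?thesis by (simp add: algebra_simps)
qed

lemma psd_offdiag:
  assumes psd: "psd_on V G"
    and uu: "(\<Sum>x\<in>V. \<Sum>y\<in>V. u x * u y * G x y) = 0"
    and symm: "(\<Sum>x\<in>V. \<Sum>y\<in>V. v x * u y * G x y) = (\<Sum>x\<in>V. \<Sum>y\<in>V. u x * v y * G x y)"
  shows "(\<Sum>x\<in>V. \<Sum>y\<in>V. u x * v y * G x y) = 0"
proof (rule ccontr)
  define B where "B = (\<Sum>x\<in>V. \<Sum>y\<in>V. u x * v y * G x y)"
  define C where "C = (\<Sum>x\<in>V. \<Sum>y\<in>V. v x * v y * G x y)"
  assume "(\<Sum>x\<in>V. \<Sum>y\<in>V. u x * v y * G x y) \<noteq> 0"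
  then have B0: "B \<noteq> 0" unfolding B_def .
  define t where "t = - (C + 1) / (2 * B)"
  have "0 \<le> (\<Sum>x\<in>V. \<Sum>y\<in>V. (t * u x + v x) * (t * u y + v y) * G x y)"
    using psd[unfolded psd_on_def, rule_format, of "\<lambda>x. t * u x + v x"] by simp
  also have "\<dots> = t * (2 * B) + C"
    unfolding quad_expand uu symm B_def[symmetric] C_def[symmetric] by simp
  also have "t * (2 * B) = - (C + 1)" unfolding t_def using B0 by simp
  finally show False by simp
qed

lemma ch_single: "ch {j} y = w j y"
  unfolding ch_def w_def by auto

lemma ch_cosingle:
  assumes "y \<in> even_cube n" "j < n"
  shows "ch ({..<n} - {j}) y = w j y"
proof -
  have ys: "y \<subseteq> {..<n}" "finite y" "even (card y)"
    using assms(1) unfolding even_cube_def by (auto intro: finite_subset)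
  have e: "({..<n} - {j}) \<inter> y = y - {j}" using ys by auto
  show ?thesis
  proof (cases "j \<in> y")
    case True
    have c1: "card y \<ge> 1" using True ys(2)
      by (metis One_nat_def Suc_leI card_gt_0_iff empty_iff)
    then have "card (y - {j}) = card y - 1" "card y \<ge> 1"
      using ys True by (auto simp: card_Diff_singleton)
    moreover obtain m where "card y = Suc m" using \<open>card y \<ge> 1\<close> by (metis One_nat_def Suc_le_D)
    ultimately show ?thesis unfolding ch_def w_def e using True ys(3) by simp
  next
    case False
    then show ?thesis unfolding ch_def w_def e using ys(3) by simp
  qed
qed

lemma A_char:
  assumes "R \<subseteq> {..<n}" "card R = 1 \<or> card R = n - 1" "1 \<le> n"
  shows "\<exists>j<n. \<forall>y\<in>even_cube n. ch R y = w j y"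
  using assms(2)
proof
  assume "card R = 1"
  then obtain j where "R = {j}" by (metis card_1_singletonE)
  then show ?thesis using assms(1) ch_single by auto
next
  assume c: "card R = n - 1"
  have "card ({..<n} - R) = 1" using c assms(1,3) by (simp add: card_Diff_subset finite_subset)
  then obtain j where j: "{..<n} - R = {j}" by (metis card_1_singletonE)
  then have "R = {..<n} - {j}" "j < n" using assms(1) by auto
  then show ?thesis using ch_cosingle by auto
qed

lemma lin_comb:
  assumes "finite A'" "\<And>R. R \<in> A' \<Longrightarrow> \<exists>j<n. \<forall>y\<in>Y. ch R y = w j y"
  shows "\<exists>b. \<forall>y\<in>Y. (\<Sum>R\<in>A'. e R * ch R y) = (\<Sum>j<n. b j * w j y)"
  using assms
proof (induction A' rule: finite_induct)
  case empty
  show ?case by (rule exI[of _ "\<lambda>_. 0"]) simp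
next
  case (insert R A')
  obtain b where b: "\<forall>y\<in>Y. (\<Sum>R\<in>A'. e R * ch R y) = (\<Sum>j<n. b j * w j y)"
    using insert by blast
  obtain j where j: "j < n" "\<forall>y\<in>Y. ch R y = w j y" using insert.prems by blast
  show ?case
  proof (rule exI[of _ "\<lambda>i. b i + (if i = j then e R else 0)"], intro ballI)
    fix y assume y: "y \<in> Y"
    have "(\<Sum>i<n. (b i + (if i = j then e R else 0)) * w i y) = (\<Sum>i<n. b i * w i y + (if i = j then e R * w j y else 0))"
      by (rule sum.cong) (auto simp: algebra_simps)
    also have "\<dots> = (\<Sum>i<n. b i * w i y) + (\<Sum>i<n. (if i = j then e R * w j y else 0))"
      by (rule sum.distrib)
    also have "(\<Sum>i<n. (if i = j then e R * w j y else 0)) = e R * w j y" using j by simp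
    finally show "(\<Sum>R\<in>insert R A'. e R * ch R y) = (\<Sum>i<n. (b i + (if i = j then e R else 0)) * w i y)"
      using insert.hyps b y j by simp
  qed
qed

lemma main_lemma:
  fixes G :: "nat set \<Rightarrow> nat set \<Rightarrow> real" and a :: real
  assumes k: "even k" "n + 2 \<le> 2 * k" "k < n"
    and sym: "\<And>x y. x \<in> even_cube n \<Longrightarrow> y \<in> even_cube n \<Longrightarrow> G x y = G y x"
    and psd: "psd_on (even_cube n) G"
    and diag: "\<And>x. x \<in> even_cube n \<Longrightarrow> G x x = 1"
    and edge: "\<And>x y. (x, y) \<in> H_edges n k \<Longrightarrow> G x y \<le> - a"
  shows "a \<le> (2 * real k - real n) / real n"
    and "a \<ge> (2 * real k - real n) / real n \<Longrightarrow> x \<in> even_cube n \<Longrightarrow> y \<in> even_cube n \<Longrightarrow>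
         G x y = 1 - 2 * real (hamming x y) / real n"
proof -
  define V where "V = even_cube n"
  define U where "U = {..<(n::nat)}"
  define Tk where "Tk = {T. T \<subseteq> U \<and> card T = k}"
  define G' where "G' = ext V G"
  define N where "N = real (card V)"
  define C where "C = real (n choose k)"
  define K1 where "K1 = C * (real n - 2 * real k) / real n"
  define FS where "FS S = FT U G' S S" for S
  have fU: "finite U" and cU: "card U = n" unfolding U_def by auto
  have VP: "V \<subseteq> Pow U" unfolding V_def U_def by (rule ec_Pow)
  have fV: "finite V" unfolding V_def by (rule ec_finite)
  have N0: "N > 0" unfolding N_def V_def using ec_empty ec_finite card_gt_0_iff by fastforce
  have C0: "C > 0" unfolding C_def using k by simp
  have n0: "real n > 0" using k by simp
  have FTe: "FT U G' S R = (\<Sum>x\<in>V. \<Sum>y\<in>V. (ch S x * ch R y) * G x y)" for S R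
    unfolding G'_def by (rule FT_ext[OF fU VP])
  have FS0: "FS S \<ge> 0" for S
    unfolding FS_def FTe using psd[unfolded psd_on_def V_def[symmetric], rule_format, of "ch S"]
    by (simp add: mult.assoc)
  have FTsym: "FT U G' S R = FT U G' R S" for S R
  proof -
    have "FT U G' S R = (\<Sum>y\<in>V. \<Sum>x\<in>V. (ch S x * ch R y) * G x y)" unfolding FTe by (rule sum.swap)
    also have "\<dots> = FT U G' R S" unfolding FTe
      by (intro sum.cong refl) (auto simp: sym V_def mult_ac)
    finally show ?thesis .
  qed
  have diagsum: "(\<Sum>x\<in>Pow U. G' x x) = N"
  proof -
    have "(\<Sum>x\<in>Pow U. G' x x) = (\<Sum>x\<in>V. G' x x)"
      using VP fU by (intro sum.mono_neutral_right) (auto simp: G'_def ext_def)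
    also have "\<dots> = (\<Sum>x\<in>V. 1)" by (intro sum.cong refl) (auto simp: G'_def ext_def diag V_def)
    finally show ?thesis unfolding N_def by simp
  qed
  have edgesum: "(\<Sum>x\<in>Pow U. \<Sum>T\<in>Tk. G' x (sd x T)) = (\<Sum>p\<in>H_edges n k. G (fst p) (snd p))"
  proof -
    have "(\<Sum>x\<in>Pow U. \<Sum>T\<in>Tk. G' x (sd x T)) = (\<Sum>x\<in>V. \<Sum>T\<in>Tk. G' x (sd x T))"
      using VP fU by (intro sum.mono_neutral_right) (auto simp: G'_def ext_def)
    also have "\<dots> = (\<Sum>x\<in>V. \<Sum>T\<in>Tk. G x (sd x T))"
      using sd_ec k(1) by (intro sum.cong refl) (auto simp: G'_def ext_def V_def Tk_def U_def)
    also have "\<dots> = (\<Sum>p\<in>H_edges n k. G (fst p) (snd p))"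
      using H_sum[OF k(1), of "\<lambda>p. G (fst p) (snd p)" n] unfolding V_def Tk_def U_def by simp
    finally show ?thesis .
  qed
  have F1: "N = (\<Sum>S\<in>Pow U. FS S) / 2 ^ n"
    using diag_fourier[OF fU, where G=G'] diagsum cU unfolding FS_def by simp
  have F2: "(\<Sum>p\<in>H_edges n k. G (fst p) (snd p)) = (\<Sum>S\<in>Pow U. FS S * KW U S k) / 2 ^ n"
    using edge_fourier[OF fU, where k=k and G=G'] edgesum cU unfolding FS_def Tk_def by simp
  have KWge: "KW U S k \<ge> K1" if "S \<in> Pow U" for S
    using KW_lower(1)[OF k, of S] that unfolding K1_def C_def U_def by auto
  have lower: "(\<Sum>p\<in>H_edges n k. G (fst p) (snd p)) \<ge> K1 * N"
  proof -
    have "(\<Sum>S\<in>Pow U. FS S * KW U S k) \<ge> (\<Sum>S\<in>Pow U. FS S * K1)"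
      using KWge FS0 by (intro sum_mono mult_left_mono) auto
    moreover have "(\<Sum>S\<in>Pow U. FS S * K1) = K1 * (\<Sum>S\<in>Pow U. FS S)"
      by (simp add: sum_distrib_left mult.commute)
    ultimately have "(\<Sum>S\<in>Pow U. FS S * KW U S k) / 2 ^ n \<ge> (K1 * (\<Sum>S\<in>Pow U. FS S)) / 2 ^ n"
      by (intro divide_right_mono) auto
    then have "(\<Sum>S\<in>Pow U. FS S * KW U S k) / 2 ^ n \<ge> K1 * ((\<Sum>S\<in>Pow U. FS S) / 2 ^ n)"
      by simp
    then show ?thesis unfolding F1 F2 .
  qed
  have upper: "(\<Sum>p\<in>H_edges n k. G (fst p) (snd p)) \<le> - a * (N * C)"
  proof -
    have "(\<Sum>p\<in>H_edges n k. G (fst p) (snd p)) \<le> (\<Sum>p\<in>H_edges n k. - a)"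
      using edge by (intro sum_mono) auto
    also have "\<dots> = - a * (N * C)"
      using H_card[OF k(1), of n] unfolding N_def C_def V_def by (simp add: sum_distrib_left[symmetric])
    finally show ?thesis .
  qed
  have K1e: "K1 = - ((2 * real k - real n) / real n) * C" unfolding K1_def using n0 by (simp add: field_simps minus_divide_left[symmetric])
  have ineq: "K1 * N \<le> - a * (N * C)" using lower upper by linarith
  show ale: "a \<le> (2 * real k - real n) / real n"
  proof -
    have "- ((2 * real k - real n) / real n) * (N * C) \<le> - a * (N * C)"
      using ineq unfolding K1e by (simp add: mult_ac)
    then have "a * (N * C) \<le> ((2 * real k - real n) / real n) * (N * C)" by linarith
    moreover have "N * C > 0" using N0 C0 by simp
    ultimately show ?thesis by (rule mult_right_le_imp_le)
  qed
  assume age: "a \<ge> (2 * real k - real n) / real n"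
  assume xV: "x \<in> even_cube n" and yV: "y \<in> even_cube n"
  have aeq: "a = (2 * real k - real n) / real n" using ale age by linarith
  have Hsum_eq: "(\<Sum>p\<in>H_edges n k. G (fst p) (snd p)) = K1 * N"
    using lower upper unfolding K1e aeq by (simp add: mult_ac)
  have tight: "G x y = - a" if "(x, y) \<in> H_edges n k" for x y
  proof -
    have fH: "finite (H_edges n k)"
      by (rule finite_subset[of _ "even_cube n \<times> even_cube n"]) (auto simp: H_edges_def ec_finite)
    have "(\<Sum>p\<in>H_edges n k. - a - G (fst p) (snd p)) = - a * (N * C) - K1 * N"
      using H_card[OF k(1), of n] Hsum_eq unfolding N_def C_def V_def
      by (simp add: sum_subtractf sum_distrib_left[symmetric])
    also have "\<dots> = 0" unfolding K1e aeq by (simp add: mult_ac)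
    finally have "\<forall>p\<in>H_edges n k. - a - G (fst p) (snd p) = 0"
      using sum_nonneg_eq_0_iff[OF fH] edge by (metis (no_types, lifting) diff_ge_0_iff_ge prod.collapse)
    then show ?thesis using that by force
  qed
  have FSz: "FS S = 0" if "S \<in> Pow U" "\<not> (card S = 1 \<or> card S = n - 1)" for S
  proof -
    have s0: "(\<Sum>S\<in>Pow U. FS S * (KW U S k - K1)) = 0"
    proof -
      have "(\<Sum>S\<in>Pow U. FS S * (KW U S k - K1)) = (\<Sum>S\<in>Pow U. FS S * KW U S k) - K1 * (\<Sum>S\<in>Pow U. FS S)"
        by (simp add: algebra_simps sum_subtractf sum_distrib_left)
      also have "\<dots> = 2 ^ n * (K1 * N) - K1 * (2 ^ n * N)"
        using F1 F2 Hsum_eq by simp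
      finally show ?thesis by simp
    qed
    have "\<forall>S\<in>Pow U. FS S * (KW U S k - K1) = 0"
      using sum_nonneg_eq_0_iff[of "Pow U" "\<lambda>S. FS S * (KW U S k - K1)"] s0 fU FS0 KWge by auto
    then have "FS S * (KW U S k - K1) = 0" using that by auto
    moreover have "KW U S k \<noteq> K1"
      using KW_lower(2)[OF k, of S] that unfolding K1_def C_def U_def by auto
    ultimately show ?thesis by simp
  qed
  have FTz: "FT U G' S R = 0" if "R \<in> Pow U" "\<not> (card R = 1 \<or> card R = n - 1)" for S R
  proof -
    have "(\<Sum>x\<in>V. \<Sum>y\<in>V. ch R x * ch S y * G x y) = 0"
    proof (rule psd_offdiag[where V = V and G = G])
      show "psd_on V G" using psd unfolding V_def .
      show "(\<Sum>x\<in>V. \<Sum>y\<in>V. ch R x * ch R y * G x y) = 0" using FSz[OF that] unfolding FS_def FTe by simp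
      show "(\<Sum>x\<in>V. \<Sum>y\<in>V. ch S x * ch R y * G x y) = (\<Sum>x\<in>V. \<Sum>y\<in>V. ch R x * ch S y * G x y)"
        using FTsym[of S R] unfolding FTe by simp
    qed
    then show ?thesis using FTsym[of S R] unfolding FTe by simp
  qed
  define A where "A = {R \<in> Pow U. card R = 1 \<or> card R = n - 1}"
  define e where "e R = (\<Sum>S\<in>Pow U. ch S x * FT U G' S R) / (2 ^ n * 2 ^ n)" for R
  have xU: "x \<subseteq> U" using xV ec_sub unfolding U_def by auto
  have rep: "G x z = (\<Sum>R\<in>A. e R * ch R z)" if "z \<in> V" for z
  proof -
    have zU: "z \<subseteq> U" using that ec_sub unfolding U_def V_def by auto
    have "2 ^ n * 2 ^ n * G x z = 2 ^ n * 2 ^ n * G' x z"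
      using that xV unfolding G'_def ext_def V_def by simp
    also have "\<dots> = (\<Sum>S\<in>Pow U. \<Sum>R\<in>Pow U. ch S x * ch R z * FT U G' S R)"
      using inversion[OF fU xU zU, of G'] cU by simp
    also have "\<dots> = (\<Sum>R\<in>Pow U. \<Sum>S\<in>Pow U. ch S x * ch R z * FT U G' S R)" by (rule sum.swap)
    also have "\<dots> = (\<Sum>R\<in>Pow U. (2 ^ n * 2 ^ n) * (e R * ch R z))"
    proof (rule sum.cong[OF refl])
      fix R
      have "(\<Sum>S\<in>Pow U. ch S x * ch R z * FT U G' S R) = ch R z * (\<Sum>S\<in>Pow U. ch S x * FT U G' S R)"
        by (simp add: sum_distrib_left mult_ac)
      also have "(\<Sum>S\<in>Pow U. ch S x * FT U G' S R) = (2 ^ n * 2 ^ n) * e R" unfolding e_def by simp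
      finally show "(\<Sum>S\<in>Pow U. ch S x * ch R z * FT U G' S R) = (2 ^ n * 2 ^ n) * (e R * ch R z)"
        by (simp add: mult_ac)
    qed
    also have "\<dots> = (2 ^ n * 2 ^ n) * (\<Sum>R\<in>Pow U. e R * ch R z)" by (simp add: sum_distrib_left)
    finally have "G x z = (\<Sum>R\<in>Pow U. e R * ch R z)" by simp
    also have "\<dots> = (\<Sum>R\<in>A. e R * ch R z)"
    proof (rule sum.mono_neutral_right)
      show "finite (Pow U)" using fU by simp
      show "A \<subseteq> Pow U" unfolding A_def by auto
      show "\<forall>R\<in>Pow U - A. e R * ch R z = 0"
        using FTz unfolding A_def e_def by auto
    qed
    finally show ?thesis .
  qed
  obtain b where b: "\<forall>z\<in>V. (\<Sum>R\<in>A. e R * ch R z) = (\<Sum>j<n. b j * w j z)"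
  proof -
    have "finite A" unfolding A_def using fU by simp
    moreover have "\<exists>j<n. \<forall>z\<in>V. ch R z = w j z" if "R \<in> A" for R
      using A_char[of R n] that k unfolding A_def U_def V_def by auto
    ultimately show ?thesis using lin_comb[of A n V e] that by blast
  qed
  have "G x y = 1 - 2 * real (card (sd x y)) / real n"
  proof (rule per_x[where Y = V and g = "G x" and b = b and k = k and al = a])
    show "x \<subseteq> {..<n}" using xU unfolding U_def .
    show "1 \<le> k" "k < n" using k by auto
    show "\<And>z. z \<in> V \<Longrightarrow> G x z = (\<Sum>j<n. b j * w j z)" using rep b by auto
    show "x \<in> V" using xV unfolding V_def .
    show "G x x = 1" using diag xV .
    show "sd x T \<in> V \<and> G x (sd x T) = - a" if "T \<subseteq> {..<n}" "card T = k" for T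
    proof -
      have "sd x T \<in> V" using sd_ec[OF xV that(1)] that k(1) unfolding V_def by auto
      moreover have "(x, sd x T) \<in> H_edges n k"
        using calculation xV that unfolding H_edges_def V_def by (auto simp: hamming_sd sd_sd)
      ultimately show ?thesis using tight by auto
    qed
    show "y \<in> V" "y \<subseteq> {..<n}" using yV ec_sub unfolding V_def by auto
  qed
  then show "G x y = 1 - 2 * real (hamming x y) / real n" by (simp add: hamming_sd)
qed

lemma finite_subseq:
  fixes f :: "nat \<Rightarrow> 'a \<Rightarrow> real"
  assumes "finite A" "\<And>j a. a \<in> A \<Longrightarrow> \<bar>f j a\<bar> \<le> B"
  shows "\<exists>r L. strict_mono r \<and> (\<forall>a\<in>A. (\<lambda>j. f (r j) a) \<longlonglongrightarrow> L a)"
  using assms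
proof (induction A rule: finite_induct)
  case empty
  show ?case by (rule exI[of _ id]) (auto simp: strict_mono_def)
next
  case (insert a A)
  obtain r L where rL: "strict_mono r" "\<forall>b\<in>A. (\<lambda>j. f (r j) b) \<longlonglongrightarrow> L b"
    using insert by blast
  obtain r2 where r2: "strict_mono r2" "monoseq (\<lambda>j. f (r (r2 j)) a)"
    using seq_monosub[of "\<lambda>j. f (r j) a"] by blast
  have "Bseq (\<lambda>j. f (r (r2 j)) a)"
    by (rule BseqI'[of _ B]) (use insert.prems in auto)
  then have "convergent (\<lambda>j. f (r (r2 j)) a)" using r2(2) Bseq_monoseq_convergent by blast
  then obtain l where l: "(\<lambda>j. f (r (r2 j)) a) \<longlonglongrightarrow> l" unfolding convergent_def by blast
  show ?case
  proof (intro exI conjI ballI)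
    show "strict_mono (r \<circ> r2)" using rL(1) r2(1) by (rule strict_mono_o)
    fix b assume b: "b \<in> insert a A"
    show "(\<lambda>j. f ((r \<circ> r2) j) b) \<longlonglongrightarrow> (L(a := l)) b"
    proof (cases "b = a")
      case True
      then show ?thesis using l by simp
    next
      case False
      then have "b \<in> A" using b by simp
      then have "((\<lambda>j. f (r j) b) \<circ> r2) \<longlonglongrightarrow> L b" using rL(2) r2(1) LIMSEQ_subseq_LIMSEQ by blast
      then show ?thesis using False by (simp add: comp_def)
    qed
  qed
qed

lemma ip_sym: "ip d u v = ip d v u"
  unfolding ip_def by (simp add: mult.commute)

lemma gram_psd: "psd_on V (\<lambda>x y. ip d (p x) (p y))"
  unfolding psd_on_def
proof
  fix c :: "nat set \<Rightarrow> real"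
  have "(\<Sum>x\<in>V. \<Sum>y\<in>V. c x * c y * ip d (p x) (p y)) = (\<Sum>i<d. (\<Sum>x\<in>V. c x * p x i) * (\<Sum>y\<in>V. c y * p y i))"
    unfolding ip_def by (simp add: sum_distrib_left sum_distrib_right mult_ac sum.swap[of _ V "{..<d}"])
  also have "\<dots> \<ge> 0" by (intro sum_nonneg) auto
  finally show "0 \<le> (\<Sum>x\<in>V. \<Sum>y\<in>V. c x * c y * ip d (p x) (p y))" .
qed

lemma ip_bound:
  assumes "unit_vec_on d u" "unit_vec_on d v"
  shows "\<bar>ip d u v\<bar> \<le> 1"
proof -
  have uu: "ip d u u = 1" and vv: "ip d v v = 1" using assms unfolding unit_vec_on_def by auto
  have "0 \<le> (\<Sum>i<d. (u i + v i)^2)" by (intro sum_nonneg) auto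
  also have "(\<Sum>i<d. (u i + v i)^2) = ip d u u + 2 * ip d u v + ip d v v"
    unfolding ip_def by (simp add: power2_eq_square algebra_simps sum.distrib sum_distrib_left)
  finally have 1: "ip d u v \<ge> -1" using uu vv by simp
  have "0 \<le> (\<Sum>i<d. (u i - v i)^2)" by (intro sum_nonneg) auto
  also have "(\<Sum>i<d. (u i - v i)^2) = ip d u u - 2 * ip d u v + ip d v v"
    unfolding ip_def by (simp add: power2_eq_square algebra_simps sum.distrib sum_subtractf sum_distrib_left)
  finally have 2: "ip d u v \<le> 1" using uu vv by simp
  show ?thesis using 1 2 by simp
qed

lemma cube_ip:
  assumes "n > 0" "x \<subseteq> {..<n}" "y \<subseteq> {..<n}"
  shows "ip n (cube_vec n x) (cube_vec n y) = 1 - 2 * real (hamming x y) / real n"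
proof -
  have "ip n (cube_vec n x) (cube_vec n y) = (\<Sum>i<n. w i (sd x y) / real n)"
    unfolding ip_def
  proof (rule sum.cong[OF refl])
    fix i assume "i \<in> {..<n}"
    then have "cube_vec n x i * cube_vec n y i = (w i x * w i y) / (sqrt (real n) * sqrt (real n))"
      unfolding cube_vec_def w_def by simp
    also have "sqrt (real n) * sqrt (real n) = real n" by simp
    finally show "cube_vec n x i * cube_vec n y i = w i (sd x y) / real n" by (simp add: w_sd)
  qed
  also have "\<dots> = (real n - 2 * real (card (sd x y))) / real n"
    using sum_w[OF sd_sub[OF assms(2,3)]] by (simp add: sum_divide_distrib[symmetric])
  also have "\<dots> = 1 - 2 * real (hamming x y) / real n" using assms(1) by (simp add: hamming_sd field_simps)
  finally show ?thesis .
qed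

lemma cube_unit:
  assumes "n > 0" "x \<subseteq> {..<n}"
  shows "unit_vec_on n (cube_vec n x)"
  unfolding unit_vec_on_def using cube_ip[OF assms(1) assms(2) assms(2)] assms(1)
  by (simp add: cube_vec_def hamming_def)

lemma simplex_exists:
  fixes V :: "nat set set"
  assumes "finite V" "card V \<ge> 2"
  shows "\<exists>p. (\<forall>x\<in>V. unit_vec_on (card V) (p x)) \<and>
    (\<forall>x\<in>V. \<forall>y\<in>V. x \<noteq> y \<longrightarrow> ip (card V) (p x) (p y) = - 1 / (real (card V) - 1))"
proof -
  define N where "N = card V"
  obtain f where f: "bij_betw f V {0..<N}" using ex_bij_betw_finite_nat[OF assms(1)] unfolding N_def by blast
  define s where "s = sqrt (1 - 1 / real N)"
  have N2: "real N \<ge> 2" using assms unfolding N_def by simp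
  have s2: "s * s = 1 - 1 / real N" unfolding s_def using N2 by simp
  have s0: "s > 0" unfolding s_def using N2 by simp
  define q where "q x i = (if i < N then ((if i = f x then 1 else 0) - 1 / real N) else 0)" for x i
  define p where "p x i = q x i / s" for x i
  have qip: "ip N (q x) (q y) = (if f x = f y then 1 else 0) - 1 / real N" if "x \<in> V" "y \<in> V" for x y
  proof -
    have fx: "f x < N" "f y < N" using f that unfolding bij_betw_def by auto
    define dx where "dx i = (if i = f x then 1 else (0::real))" for i
    define dy where "dy i = (if i = f y then 1 else (0::real))" for i
    have "ip N (q x) (q y) = (\<Sum>i<N. dx i * dy i - (1 / real N) * dx i - (1 / real N) * dy i + 1 / (real N * real N))"
      unfolding ip_def q_def dx_def dy_def by (intro sum.cong refl) (simp add: algebra_simps)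
    also have "\<dots> = (\<Sum>i<N. dx i * dy i) - (1 / real N) * (\<Sum>i<N. dx i) - (1 / real N) * (\<Sum>i<N. dy i) + real N * (1 / (real N * real N))"
      by (simp only: sum.distrib sum_subtractf sum_distrib_left[symmetric] sum_constant card_lessThan)
    also have "(\<Sum>i<N. dx i * dy i) = (if f x = f y then 1 else 0)"
    proof -
      have "(\<Sum>i<N. dx i * dy i) = (\<Sum>i<N. if i = f x then (if f x = f y then 1 else 0) else 0)"
        unfolding dx_def dy_def by (intro sum.cong refl) auto
      then show ?thesis using fx by simp
    qed
    also have "(\<Sum>i<N. dx i) = 1" unfolding dx_def using fx by simp
    also have "(\<Sum>i<N. dy i) = 1" unfolding dy_def using fx by simp
    also have "(if f x = f y then 1 else 0) - 1 / real N * 1 - 1 / real N * 1 + real N * (1 / (real N * real N))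
        = (if f x = f y then 1 else 0) - 1 / real N" using N2 by (simp add: field_simps)
    finally show ?thesis .
  qed
  have pip: "ip N (p x) (p y) = ip N (q x) (q y) / (s * s)" for x y
    unfolding ip_def p_def by (simp add: sum_divide_distrib)
  show ?thesis
  proof (intro exI[of _ p] conjI ballI impI)
    fix x assume x: "x \<in> V"
    have "ip N (p x) (p x) = 1" unfolding pip qip[OF x x] s2 using N2 by (simp add: field_simps)
    then show "unit_vec_on (card V) (p x)" unfolding unit_vec_on_def N_def[symmetric]
      by (simp add: p_def q_def)
  next
    fix x y assume xy: "x \<in> V" "y \<in> V" "x \<noteq> y"
    then have "f x \<noteq> f y" using f unfolding bij_betw_def inj_on_def by blast
    then have "ip N (p x) (p y) = (- 1 / real N) / (1 - 1 / real N)" unfolding pip qip[OF xy(1,2)] s2 by simp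
    also have "\<dots> = - 1 / (real N - 1)" using N2 by (simp add: field_simps)
    finally show "ip (card V) (p x) (p y) = - 1 / (real (card V) - 1)" unfolding N_def .
  qed
qed

lemma lowb:
  assumes k: "even k" "n + 2 \<le> 2 * k" "k < n"
    and vc: "vector_coloring (even_cube n) E' t d p" and HE: "H_edges n k \<subseteq> E'"
  shows "t \<ge> 2 * real k / (2 * real k - real n)"
proof -
  have t2: "t \<ge> 2" and units: "\<forall>x\<in>even_cube n. unit_vec_on d (p x)"
    and edges: "\<forall>(x, y)\<in>E'. ip d (p x) (p y) \<le> - 1 / (t - 1)"
    using vc unfolding vector_coloring_def by auto
  have "1 / (t - 1) \<le> (2 * real k - real n) / real n"
  proof (rule main_lemma(1)[OF k, where G = "\<lambda>x y. ip d (p x) (p y)"])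
    show "\<And>x y. x \<in> even_cube n \<Longrightarrow> y \<in> even_cube n \<Longrightarrow> ip d (p x) (p y) = ip d (p y) (p x)"
      by (rule ip_sym)
    show "psd_on (even_cube n) (\<lambda>x y. ip d (p x) (p y))" by (rule gram_psd)
    show "\<And>x. x \<in> even_cube n \<Longrightarrow> ip d (p x) (p x) = 1" using units unfolding unit_vec_on_def by auto
    show "\<And>x y. (x, y) \<in> H_edges n k \<Longrightarrow> ip d (p x) (p y) \<le> - (1 / (t - 1))"
      using edges HE by fastforce
  qed
  moreover have "t - 1 > 0" using t2 by simp
  moreover have "2 * real k - real n > 0" "real n > 0" using k by auto
  ultimately have "real n \<le> (2 * real k - real n) * (t - 1)" by (simp add: field_simps)
  then show ?thesis using \<open>2 * real k - real n > 0\<close> by (simp add: field_simps)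
qed

lemma t0_facts:
  assumes k: "n + 2 \<le> 2 * k" "k < n"
  shows "- 1 / (2 * real k / (2 * real k - real n) - 1) = - ((2 * real k - real n) / real n)"
    and "2 * real k / (2 * real k - real n) \<ge> 2"
proof -
  have p: "2 * real k - real n > 0" "real n > 0" using k by auto
  have "2 * real k / (2 * real k - real n) - 1 = real n / (2 * real k - real n)"
    using p by (simp add: field_simps)
  then show "- 1 / (2 * real k / (2 * real k - real n) - 1) = - ((2 * real k - real n) / real n)"
    using p by (simp add: field_simps)
  show "2 * real k / (2 * real k - real n) \<ge> 2" using p k by (simp add: field_simps)
qed

lemma cube_coloring:
  assumes k: "n + 2 \<le> 2 * k" "k < n" and E: "E' \<subseteq> H'_edges n k"
  shows "vector_coloring (even_cube n) E' (2 * real k / (2 * real k - real n)) n (cube_vec n)"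
  unfolding vector_coloring_def
proof (intro conjI ballI)
  have n0: "n > 0" using k by simp
  show "2 \<le> 2 * real k / (2 * real k - real n)" by (rule t0_facts(2)[OF k])
  show "unit_vec_on n (cube_vec n x)" if "x \<in> even_cube n" for x
    using cube_unit[OF n0 ec_sub[OF that]] .
  fix e assume e: "e \<in> E'"
  obtain x y where xy: "e = (x, y)" by fastforce
  have xyV: "x \<in> even_cube n" "y \<in> even_cube n" "hamming x y \<ge> k"
    using E e xy unfolding H'_edges_def by auto
  have "ip n (cube_vec n x) (cube_vec n y) = 1 - 2 * real (hamming x y) / real n"
    using cube_ip[OF n0 ec_sub[OF xyV(1)] ec_sub[OF xyV(2)]] .
  also have "\<dots> \<le> 1 - 2 * real k / real n" using xyV(3) n0 by (simp add: divide_right_mono)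
  also have "\<dots> = - 1 / (2 * real k / (2 * real k - real n) - 1)"
    unfolding t0_facts(1)[OF k] using n0 by (simp add: field_simps)
  finally show "case e of (x, y) \<Rightarrow> ip n (cube_vec n x) (cube_vec n y) \<le> - 1 / (2 * real k / (2 * real k - real n) - 1)"
    using xy by simp
qed

lemma chi_v_val:
  assumes k: "even k" "n + 2 \<le> 2 * k" "k < n" and E: "H_edges n k \<subseteq> E'" "E' \<subseteq> H'_edges n k"
  shows "chi_v (even_cube n) E' = 2 * real k / (2 * real k - real n)"
  unfolding chi_v_def
proof (rule cInf_eq_minimum)
  show "2 * real k / (2 * real k - real n) \<in> {t. \<exists>d p. vector_coloring (even_cube n) E' t d p}"
    using cube_coloring[OF k(2,3) E(2)] by blast
  show "\<And>t. t \<in> {t. \<exists>d p. vector_coloring (even_cube n) E' t d p} \<Longrightarrow> 2 * real k / (2 * real k - real n) \<le> t"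
    using lowb[OF k _ E(1)] by blast
qed

lemma gram_unique:
  assumes k: "even k" "n + 2 \<le> 2 * k" "k < n" and E: "H_edges n k \<subseteq> E'"
    and vc: "vector_coloring (even_cube n) E' (2 * real k / (2 * real k - real n)) d q"
    and xy: "x \<in> even_cube n" "y \<in> even_cube n"
  shows "ip d (q x) (q y) = 1 - 2 * real (hamming x y) / real n"
proof (rule main_lemma(2)[OF k, where G = "\<lambda>x y. ip d (q x) (q y)" and a = "(2 * real k - real n) / real n"])
  have units: "\<forall>x\<in>even_cube n. unit_vec_on d (q x)"
    and edges: "\<forall>(x, y)\<in>E'. ip d (q x) (q y) \<le> - 1 / (2 * real k / (2 * real k - real n) - 1)"
    using vc unfolding vector_coloring_def by auto
  show "\<And>x y. x \<in> even_cube n \<Longrightarrow> y \<in> even_cube n \<Longrightarrow> ip d (q x) (q y) = ip d (q y) (q x)"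
    by (rule ip_sym)
  show "psd_on (even_cube n) (\<lambda>x y. ip d (q x) (q y))" by (rule gram_psd)
  show "\<And>x. x \<in> even_cube n \<Longrightarrow> ip d (q x) (q x) = 1" using units unfolding unit_vec_on_def by auto
  show "\<And>x y. (x, y) \<in> H_edges n k \<Longrightarrow> ip d (q x) (q y) \<le> - ((2 * real k - real n) / real n)"
    using edges E unfolding t0_facts(1)[OF k(2,3)] by fastforce
qed (use xy in auto)

lemma hamming_self: "hamming x x = 0" unfolding hamming_def by simp

lemma chi_sv_gt:
  assumes k: "even k" "n + 2 \<le> 2 * k" "k < n"
    and E: "H_edges n k \<subset> E" "E \<subseteq> H'_edges n k"
  shows "2 * real k / (2 * real k - real n) < chi_sv (even_cube n) E"
proof -
  define V where "V = even_cube n"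
  define t0 where "t0 = 2 * real k / (2 * real k - real n)"
  define al where "al = (2 * real k - real n) / real n"
  define St where "St = {t. \<exists>d p. strict_vector_coloring V E t d p}"
  have n0: "n > 0" using k by simp
  have t0al: "- 1 / (t0 - 1) = - al" unfolding t0_def al_def by (rule t0_facts(1)[OF k(2,3)])
  have t02: "t0 \<ge> 2" unfolding t0_def by (rule t0_facts(2)[OF k(2,3)])
  obtain x0 y0 where e0: "(x0, y0) \<in> E" "(x0, y0) \<notin> H_edges n k" using E(1) by auto
  have e0V: "x0 \<in> V" "y0 \<in> V" "hamming x0 y0 \<ge> k" using E(2) e0(1) unfolding H'_edges_def V_def by auto
  have e0k: "hamming x0 y0 \<noteq> k" using e0 e0V unfolding H_edges_def V_def by auto
  have EV: "x \<in> V \<and> y \<in> V \<and> x \<noteq> y" if "(x, y) \<in> E" for x y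
  proof -
    have "x \<in> V" "y \<in> V" "hamming x y \<ge> k" using E(2) that unfolding H'_edges_def V_def by auto
    moreover have "k > 0" using k by simp
    ultimately show ?thesis using hamming_self by (metis not_le)
  qed
  have fV: "finite V" unfolding V_def by (rule ec_finite)
  have cV: "card V \<ge> 2"
  proof -
    have "x0 \<noteq> y0" using EV e0(1) by blast
    then have "card {x0, y0} = 2" by simp
    moreover have "{x0, y0} \<subseteq> V" using e0V by auto
    ultimately show ?thesis using fV by (metis card_mono)
  qed
  have Sne: "St \<noteq> {}"
  proof -
    obtain p where p: "\<forall>x\<in>V. unit_vec_on (card V) (p x)"
      "\<forall>x\<in>V. \<forall>y\<in>V. x \<noteq> y \<longrightarrow> ip (card V) (p x) (p y) = - 1 / (real (card V) - 1)"
      using simplex_exists[OF fV cV] by blast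
    have "strict_vector_coloring V E (real (card V)) (card V) p"
      unfolding strict_vector_coloring_def using p EV cV by auto
    then show ?thesis unfolding St_def by blast
  qed
  have Sbdd: "bdd_below St" unfolding St_def bdd_below_def strict_vector_coloring_def by auto
  have Sge: "t \<ge> t0" if tS: "t \<in> St" for t
  proof -
    obtain d p where "strict_vector_coloring V E t d p" using tS unfolding St_def by blast
    then have "vector_coloring V E t d p" unfolding strict_vector_coloring_def vector_coloring_def by auto
    then show ?thesis using lowb[OF k, of E t d p] E(1) unfolding t0_def V_def by auto
  qed
  have InfS: "Inf St \<ge> t0" using Sne Sge by (intro cInf_greatest) auto
  have "Inf St \<noteq> t0"
  proof
    assume Inf_eq: "Inf St = t0"
    have "\<forall>j::nat. \<exists>z. strict_vector_coloring V E (fst z) (fst (snd z)) (snd (snd z)) \<and> fst z < t0 + 1 / real (Suc j)"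
    proof
      fix j :: nat
      have "Inf St < t0 + 1 / real (Suc j)" unfolding Inf_eq by simp
      then obtain t where "t \<in> St" "t < t0 + 1 / real (Suc j)" using cInf_less_iff[OF Sne Sbdd] by blast
      then obtain d p where "strict_vector_coloring V E t d p" unfolding St_def by blast
      then show "\<exists>z. strict_vector_coloring V E (fst z) (fst (snd z)) (snd (snd z)) \<and> fst z < t0 + 1 / real (Suc j)"
        using \<open>t < _\<close> by (intro exI[of _ "(t, d, p)"]) simp
    qed
    then obtain Z where Z: "\<And>j. strict_vector_coloring V E (fst (Z j)) (fst (snd (Z j))) (snd (snd (Z j)))"
      "\<And>j. fst (Z j) < t0 + 1 / real (Suc j)" by metis
    define T where "T j = fst (Z j)" for j
    define D where "D j = fst (snd (Z j))" for j
    define P where "P j = snd (snd (Z j))" for j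
    have sc: "strict_vector_coloring V E (T j) (D j) (P j)" for j using Z(1) unfolding T_def D_def P_def .
    have Tlt: "T j < t0 + 1 / real (Suc j)" for j using Z(2) unfolding T_def .
    have Tge: "T j \<ge> t0" for j using Sge sc unfolding St_def by blast
    have units: "\<And>x. x \<in> V \<Longrightarrow> unit_vec_on (D j) (P j x)" for j
      using sc unfolding strict_vector_coloring_def by auto
    have Eeq: "\<And>x y. (x, y) \<in> E \<Longrightarrow> ip (D j) (P j x) (P j y) = - 1 / (T j - 1)" for j
      using sc unfolding strict_vector_coloring_def by fastforce
    define g where "g j xy = ip (D j) (P j (fst xy)) (P j (snd xy))" for j xy
    have gb: "\<bar>g j xy\<bar> \<le> 1" if "xy \<in> V \<times> V" for j xy
      unfolding g_def using that units ip_bound by auto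
    obtain r L where rL: "strict_mono r" "\<forall>xy\<in>V \<times> V. (\<lambda>j. g (r j) xy) \<longlonglongrightarrow> L xy"
      using finite_subseq[of "V \<times> V" g 1] fV gb by blast
    define Gl where "Gl x y = L (x, y)" for x y
    have lim: "(\<lambda>j. ip (D (r j)) (P (r j) x) (P (r j) y)) \<longlonglongrightarrow> Gl x y" if "x \<in> V" "y \<in> V" for x y
      using rL(2) that unfolding Gl_def g_def by auto
    have Tlim: "T \<longlonglongrightarrow> t0"
    proof (rule tendsto_sandwich[of "\<lambda>_. t0" _ _ "\<lambda>j. t0 + 1 / real (Suc j)"])
      show "\<forall>\<^sub>F j in sequentially. t0 \<le> T j" using Tge by simp
      show "\<forall>\<^sub>F j in sequentially. T j \<le> t0 + 1 / real (Suc j)" using Tlt by (simp add: less_imp_le)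
      show "(\<lambda>j. t0) \<longlonglongrightarrow> t0" by simp
      have "(\<lambda>j. t0 + inverse (real (Suc j))) \<longlonglongrightarrow> t0 + 0"
        by (intro tendsto_add tendsto_const LIMSEQ_inverse_real_of_nat)
      then show "(\<lambda>j. t0 + 1 / real (Suc j)) \<longlonglongrightarrow> t0" by (simp add: inverse_eq_divide)
    qed
    have Trlim: "(\<lambda>j. T (r j)) \<longlonglongrightarrow> t0"
      using LIMSEQ_subseq_LIMSEQ[OF Tlim rL(1)] by (simp add: comp_def)
    have qlim: "(\<lambda>j. - 1 / (T (r j) - 1)) \<longlonglongrightarrow> - 1 / (t0 - 1)"
      using t02 by (intro tendsto_intros Trlim) auto
    have GlE: "Gl x y = - al" if "(x, y) \<in> E" for x y
    proof -
      have xy: "x \<in> V" "y \<in> V" using EV that by auto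
      have "(\<lambda>j. ip (D (r j)) (P (r j) x) (P (r j) y)) = (\<lambda>j. - 1 / (T (r j) - 1))"
        using Eeq that by auto
      then have "(\<lambda>j. - 1 / (T (r j) - 1)) \<longlonglongrightarrow> Gl x y" using lim[OF xy] by simp
      then show ?thesis using qlim LIMSEQ_unique t0al by metis
    qed
    have main: "Gl x y = 1 - 2 * real (hamming x y) / real n" if "x \<in> V" "y \<in> V" for x y
    proof (rule main_lemma(2)[OF k, where G = Gl and a = al])
      show "\<And>x y. x \<in> even_cube n \<Longrightarrow> y \<in> even_cube n \<Longrightarrow> Gl x y = Gl y x"
      proof -
        fix x y assume xy: "x \<in> even_cube n" "y \<in> even_cube n"
        have "(\<lambda>j. ip (D (r j)) (P (r j) x) (P (r j) y)) \<longlonglongrightarrow> Gl y x"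
          using lim[of y x] xy ip_sym unfolding V_def by simp
        then show "Gl x y = Gl y x" using lim[of x y] xy LIMSEQ_unique unfolding V_def by blast
      qed
      show "psd_on (even_cube n) Gl"
        unfolding psd_on_def
      proof
        fix c :: "nat set \<Rightarrow> real"
        have "(\<lambda>j. \<Sum>x\<in>V. \<Sum>y\<in>V. c x * c y * ip (D (r j)) (P (r j) x) (P (r j) y)) \<longlonglongrightarrow>
              (\<Sum>x\<in>V. \<Sum>y\<in>V. c x * c y * Gl x y)"
          using lim by (intro tendsto_sum tendsto_mult_left) auto
        moreover have "\<forall>j. 0 \<le> (\<Sum>x\<in>V. \<Sum>y\<in>V. c x * c y * ip (D (r j)) (P (r j) x) (P (r j) y))"
          using gram_psd unfolding psd_on_def by blast
        ultimately show "0 \<le> (\<Sum>x\<in>even_cube n. \<Sum>y\<in>even_cube n. c x * c y * Gl x y)"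
          unfolding V_def by (intro LIMSEQ_le_const) auto
      qed
      show "\<And>x. x \<in> even_cube n \<Longrightarrow> Gl x x = 1"
      proof -
        fix x assume x: "x \<in> even_cube n"
        have "(\<lambda>j. ip (D (r j)) (P (r j) x) (P (r j) x)) = (\<lambda>j. 1)"
          using units x unfolding unit_vec_on_def V_def by auto
        then show "Gl x x = 1" using lim[of x x] x LIMSEQ_unique[OF _ tendsto_const] unfolding V_def by metis
      qed
      show "\<And>x y. (x, y) \<in> H_edges n k \<Longrightarrow> Gl x y \<le> - al" using GlE E(1) by auto
      show "(2 * real k - real n) / real n \<le> al" unfolding al_def by simp
    qed (use that in \<open>auto simp: V_def\<close>)
    have "- al = 1 - 2 * real (hamming x0 y0) / real n" using GlE[OF e0(1)] main[OF e0V(1,2)] by simp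
    then have "real (hamming x0 y0) = real k" unfolding al_def using n0 by (simp add: field_simps)
    then show False using e0k by simp
  qed
  then have "t0 < Inf St" using InfS by simp
  then show ?thesis unfolding chi_sv_def St_def t0_def V_def .
qed

theorem corollary3p13:
  fixes n k :: nat and E :: "(nat set \<times> nat set) set"
  assumes "n > 0" and "even k" and "real n / 2 + 1 \<le> real k" and "k \<le> n - 1"
    and "sym E"
    and "H_edges n k \<subset> E" and "E \<subseteq> H'_edges n k"
  shows "chi_v (even_cube n) E = chi_v (even_cube n) (H_edges n k)
    \<and> uniquely_vector_colorable (even_cube n) E
    \<and> optimal_vector_coloring (even_cube n) E n (cube_vec n)
    \<and> (\<forall>d q. optimal_vector_coloring (even_cube n) E d q
           \<longrightarrow> same_gram (even_cube n) d q n (cube_vec n))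
    \<and> \<not> strict_vector_coloring (even_cube n) E (chi_v (even_cube n) E) n (cube_vec n)
    \<and> chi_v (even_cube n) E < chi_sv (even_cube n) E"
proof -
  have k: "even k" "n + 2 \<le> 2 * k" "k < n" using assms(1-4) by linarith+
  define V where "V = even_cube n"
  define t0 where "t0 = 2 * real k / (2 * real k - real n)"
  have HE: "H_edges n k \<subseteq> E" using assms(6) by auto
  have HH': "H_edges n k \<subseteq> H'_edges n k" unfolding H_edges_def H'_edges_def by auto
  have chiE: "chi_v V E = t0" unfolding V_def t0_def by (rule chi_v_val[OF k HE assms(7)])
  have chiH: "chi_v V (H_edges n k) = t0" unfolding V_def t0_def by (rule chi_v_val[OF k order.refl HH'])
  have n0: "n > 0" by (rule assms(1))
  have opt_gram: "ip d (q x) (q y) = 1 - 2 * real (hamming x y) / real n"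
    if "optimal_vector_coloring V E d q" "x \<in> V" "y \<in> V" for d q x y
    using gram_unique[OF k HE, of d q x y] that chiE unfolding optimal_vector_coloring_def V_def t0_def by simp
  have cube_gram: "ip n (cube_vec n x) (cube_vec n y) = 1 - 2 * real (hamming x y) / real n"
    if "x \<in> V" "y \<in> V" for x y
    using cube_ip[OF n0 ec_sub ec_sub] that unfolding V_def by blast
  have c1: "uniquely_vector_colorable V E"
    unfolding uniquely_vector_colorable_def same_gram_def using opt_gram by auto
  have c2: "optimal_vector_coloring V E n (cube_vec n)"
    unfolding optimal_vector_coloring_def chiE unfolding t0_def V_def by (rule cube_coloring[OF k(2,3) assms(7)])
  have c3: "\<forall>d q. optimal_vector_coloring V E d q \<longrightarrow> same_gram V d q n (cube_vec n)"
    unfolding same_gram_def using opt_gram cube_gram by auto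
  have c4: "\<not> strict_vector_coloring V E (chi_v V E) n (cube_vec n)"
  proof
    assume "strict_vector_coloring V E (chi_v V E) n (cube_vec n)"
    then have st: "\<forall>(x, y)\<in>E. ip n (cube_vec n x) (cube_vec n y) = - 1 / (t0 - 1)"
      unfolding strict_vector_coloring_def chiE by auto
    obtain x0 y0 where e0: "(x0, y0) \<in> E" "(x0, y0) \<notin> H_edges n k" using assms(6) by auto
    have e0V: "x0 \<in> V" "y0 \<in> V" using assms(7) e0(1) unfolding H'_edges_def V_def by auto
    have e0k: "hamming x0 y0 \<noteq> k" using e0 e0V unfolding H_edges_def V_def by auto
    have "1 - 2 * real (hamming x0 y0) / real n = - ((2 * real k - real n) / real n)"
      using st e0(1) cube_gram[OF e0V] t0_facts(1)[OF k(2,3)] unfolding t0_def by auto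
    then have "real (hamming x0 y0) = real k" using n0 by (simp add: field_simps)
    then show False using e0k by simp
  qed
  have c5: "chi_v V E < chi_sv V E" unfolding chiE unfolding t0_def V_def by (rule chi_sv_gt[OF k assms(6,7)])
  show ?thesis using chiE chiH c1 c2 c3 c4 c5 unfolding V_def by simp
qed

end
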